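(* Let $\nu\in\mathbb{R}$ with $|\nu|<1$. Then all zeros of the entire function $z\mapsto{}_1F_2\!\left(1;\frac{3-\nu}{2},\frac{3+\nu}{2};z\right)$ are real, negative and simple, and each of them lies in one of the intervals $$\left[-\frac{\pi^2(k+1)^2}{4},\,-\frac{\pi^2k^2}{4}\right],\qquad k=1,2,\ldots$$
   Context: ${}_1F_2(a_1;b_1,b_2;x)=\sum_{n\ge0}\frac{(a_1)_n}{(b_1)_n(b_2)_n}\frac{x^n}{n!}$ is the generalized hypergeometric series. *)

theory Defs
  imports "HOL-Complex_Analysis.Complex_Analysis"
begin

definition hyp1F2 :: "complex \<Rightarrow> complex \<Rightarrow> complex \<Rightarrow> complex \<Rightarrow> complex" where
  "hyp1F2 a1 b1 b2 x =
     (\<Sum>n. pochhammer a1 n / (pochhammer b1 n * pochhammer b2 n) * x ^ n / of_nat (fact n))"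

end

theory Submission
  imports Defs "HOL-Computational_Algebra.Fundamental_Theorem_Algebra"
begin

lemma cohn_aux:
  fixes u r :: complex
  assumes "norm u \<ge> 1" "norm r \<le> 1"
  shows "norm (1 - r*u) \<le> norm (cnj u - r)"
proof -
  have eq: "complex_of_real ((norm (cnj u - r))^2 - (norm(1 - r*u))^2)
      = complex_of_real ((norm u^2 - 1)*(1 - norm r^2))"
    unfolding of_real_diff of_real_mult complex_norm_square of_real_1
    by (simp add: algebra_simps)
  have "(norm u^2 - 1)*(1 - norm r^2) \<ge> 0"
  proof (rule mult_nonneg_nonneg)
    show "0 \<le> (norm u)\<^sup>2 - 1" using assms(1) by (simp add: one_le_power)
    have "norm r ^2 \<le> 1" using assms(2) by (simp add: power_le_one)
    then show "0 \<le> 1 - (norm r)\<^sup>2" by simp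
  qed
  then have "(norm(1 - r*u))^2 \<le> (norm (cnj u - r))^2"
    using eq of_real_eq_iff by (smt (verit))
  then show ?thesis by (simp add: power2_le_iff_abs_le)
qed

lemma cohn:
  fixes p :: "complex poly"
  assumes "\<And>r. poly p r = 0 \<Longrightarrow> norm r \<le> 1" "norm u \<ge> 1"
  shows "norm (u^degree p * poly p (1/u)) \<le> norm (poly p (cnj u))"
  using assms(1)
proof (induction "degree p" arbitrary: p)
  case 0
  then obtain c where "p = [:c:]" by (metis degree_eq_zeroE)
  then show ?case by simp
next
  case (Suc n)
  have "\<not> constant (poly p)" using Suc(2) by (simp add: constant_degree)
  then obtain r where r: "poly p r = 0" using fundamental_theorem_of_algebra by blast
  then obtain q where pq: "p = [:-r, 1:] * q" by (meson dvd_def poly_eq_0_iff_dvd)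
  have q0: "q \<noteq> 0" using pq Suc(2) by auto
  have "degree ([:-r,1:]*q) = degree [:-r,1:] + degree q" by (rule degree_mult_eq) (use q0 in auto)
  then have dq: "degree q = n" using Suc(2) pq by simp
  have rq: "\<And>s. poly q s = 0 \<Longrightarrow> norm s \<le> 1" using Suc(3) pq by simp
  have IH: "norm (u^n * poly q (1/u)) \<le> norm (poly q (cnj u))"
    using Suc(1)[of q] dq rq by simp
  have u0: "u \<noteq> 0" using assms(2) by auto
  have r1: "norm r \<le> 1" using Suc(3) r by simp
  have pp: "poly p (1/u) = (1/u - r) * poly q (1/u)" by (simp add: pq algebra_simps)
  have "u^degree p * poly p (1/u) = u^Suc n * ((1/u - r) * poly q (1/u))"
    using Suc(2) pp by simp
  also have "\<dots> = (1 - r*u) * (u^n * poly q (1/u))"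
    using u0 by (simp add: algebra_simps)
  finally have "u^degree p * poly p (1/u) = (1 - r*u) * (u^n * poly q (1/u))" .
  moreover have "poly p (cnj u) = (cnj u - r) * poly q (cnj u)"
    by (simp add: pq algebra_simps)
  ultimately show ?case
    using cohn_aux[OF assms(2) r1] IH
    by (simp add: norm_mult mult_mono)
qed

lemma ek_identity:
  fixes a :: "nat \<Rightarrow> real" and u :: complex
  shows "(u - 1) * (\<Sum>j<Suc m. of_real (a j) * u^j) =
     of_real (a m) * u^Suc m - of_real (a 0) - (\<Sum>j<m. of_real (a (Suc j) - a j) * u^Suc j)"
  by (induction m) (simp_all add: algebra_simps)


lemma diff3_eq: "x - y - z = (0::complex) \<Longrightarrow> x = y + z"
  by (simp add: algebra_simps)

lemma ek:
  fixes a :: "nat \<Rightarrow> real" and u :: complex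
  assumes "0 < a 0" "\<And>j. j < m \<Longrightarrow> a j \<le> a (Suc j)" "norm u > 1"
  shows "(\<Sum>j<Suc m. of_real (a j) * u^j) \<noteq> 0"
proof
  assume h: "(\<Sum>j<Suc m. of_real (a j) * u^j) = 0"
  have "of_real (a m) * u^Suc m - of_real (a 0) - (\<Sum>j<m. of_real (a (Suc j) - a j) * u^Suc j) = 0"
    using ek_identity[where u=u and m=m and a=a] h by simp
  then have eq: "of_real (a m) * u^Suc m = of_real (a 0) + (\<Sum>j<m. of_real (a (Suc j) - a j) * u^Suc j)"
    by (rule diff3_eq)
  have tel: "(\<Sum>j<m. a (Suc j) - a j) = a m - a 0" by (simp add: sum_lessThan_telescope)
  have "(\<Sum>j<m. a (Suc j) - a j) \<ge> 0" by (rule sum_nonneg) (use assms(2) in auto)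
  then have am: "a m \<ge> a 0" using tel by simp
  then have am0: "a m > 0" using assms(1) by simp
  have u1: "norm u \<ge> 1" using assms(3) by simp
  have "a m * norm u ^ Suc m = norm (of_real (a m) * u^Suc m)"
    using am0 by (simp add: norm_mult norm_power)
  also have "\<dots> \<le> a 0 + (\<Sum>j<m. (a (Suc j) - a j) * norm u ^ Suc j)"
    unfolding eq
    apply (rule order_trans[OF norm_triangle_ineq])
    apply (rule add_mono)
     apply (simp add: assms(1) less_imp_le)
    apply (rule order_trans[OF norm_sum])
    apply (rule sum_mono)
    subgoal for i using assms(2)[of i] by (simp add: norm_mult norm_power abs_of_nonneg flip: of_real_diff)
    done
  also have "\<dots> \<le> a 0 * norm u ^ m + (\<Sum>j<m. (a (Suc j) - a j) * norm u ^ m)"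
    apply (rule add_mono)
     apply (simp add: assms(1) less_imp_le one_le_power u1)
    apply (rule sum_mono)
    apply (rule mult_left_mono)
    subgoal for j using assms(2)[of j] u1 power_increasing[of "Suc j" m "norm u"] by simp
    subgoal for j using assms(2)[of j] by simp
    done
  also have "\<dots> = a m * norm u ^ m"
  proof -
    have "(\<Sum>j<m. (a (Suc j) - a j) * norm u ^ m) = (a m - a 0) * norm u ^ m"
      by (simp add: sum_distrib_right[symmetric] tel)
    then show ?thesis by (simp add: algebra_simps)
  qed
  finally have "a m * norm u ^ Suc m \<le> a m * norm u ^ m" .
  then have "norm u ^ Suc m \<le> norm u ^ m" using am0 by simp
  moreover have "norm u ^ m > 0" using assms(3) by (intro zero_less_power) auto
  ultimately have "norm u * norm u ^ m \<le> 1 * norm u ^ m" "norm u ^ m > 0" by simp_all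
  then have "norm u \<le> 1" using mult_le_cancel_right by blast
  then show False using assms(3) by simp
qed

lemma sine_sum_nonzero_lower:
  fixes a :: "nat \<Rightarrow> real" and h :: real and w :: complex
  assumes a0: "0 < a 0" and am: "\<And>j. j < m \<Longrightarrow> a j \<le> a (Suc j)" and h: "h > 0"
    and w: "Im w < 0"
  shows "(\<Sum>j<Suc m. of_real (a j) * sin (of_real (h * real (Suc j)) * w)) \<noteq> 0"
proof
  assume S0: "(\<Sum>j<Suc m. of_real (a j) * sin (of_real (h * real (Suc j)) * w)) = 0"
  define u where "u = exp (\<i> * of_real h * w)"
  define R where "R x = (\<Sum>j<Suc m. of_real (a j) * x^j)" for x :: complex
  have nu: "norm u > 1" unfolding u_def using h w by (simp add: mult_pos_neg)
  then have u0: "u \<noteq> 0" by auto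
  have sinj: "sin (of_real (h * real (Suc j)) * w) = (u^Suc j - (1/u)^Suc j)/(2*\<i>)" for j
  proof -
    have e1: "exp (\<i> * (of_real (h * real (Suc j)) * w)) = u^Suc j"
      unfolding u_def exp_of_nat_mult[symmetric] by (simp add: algebra_simps)
    have e2: "exp (- (\<i> * (of_real (h * real (Suc j)) * w))) = (1/u)^Suc j"
      unfolding exp_minus e1 by (simp add: power_one_over inverse_eq_divide)
    show ?thesis unfolding sin_exp_eq e1 e2 ..
  qed
  have "(\<Sum>j<Suc m. of_real (a j) * sin (of_real (h * real (Suc j)) * w))
      = (u * R u - (1/u) * R (1/u)) / (2*\<i>)"
  proof -
    have "(\<Sum>j<Suc m. of_real (a j) * sin (of_real (h * real (Suc j)) * w))
       = (\<Sum>j<Suc m. (of_real (a j) * u^Suc j - of_real (a j) * (1/u)^Suc j) / (2*\<i>))"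
      unfolding sinj by (rule sum.cong[OF refl]) (simp only: times_divide_eq_right right_diff_distrib)
    also have "\<dots> = ((\<Sum>j<Suc m. of_real (a j) * u^Suc j) - (\<Sum>j<Suc m. of_real (a j) * (1/u)^Suc j)) / (2*\<i>)"
      by (simp only: sum_divide_distrib[symmetric] sum_subtractf)
    also have "(\<Sum>j<Suc m. of_real (a j) * u^Suc j) = u * R u"
      unfolding R_def sum_distrib_left by (simp add: algebra_simps)
    also have "(\<Sum>j<Suc m. of_real (a j) * (1/u)^Suc j) = (1/u) * R (1/u)"
      unfolding R_def sum_distrib_left by (simp add: algebra_simps)
    finally show ?thesis .
  qed
  with S0 have eqR: "u * R u = (1/u) * R (1/u)" by simp
  have amono: "a j \<le> a k" if "j \<le> k" "k \<le> m" for j k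
    using that
  proof (induction k)
    case 0 then show ?case by simp
  next
    case (Suc k)
    then show ?case using am[of k] by (cases "j = Suc k") auto
  qed
  have apos: "a m > 0" using amono[of 0 m] a0 by simp
  define p where "p = (\<Sum>j<Suc m. monom (complex_of_real (a j)) j)"
  have polyp: "poly p x = R x" for x unfolding p_def R_def by (simp add: poly_sum poly_monom)
  have "degree p \<le> m" unfolding p_def
    by (rule degree_sum_le) (auto intro: order_trans[OF degree_monom_le])
  moreover have "coeff p m \<noteq> 0" using apos unfolding p_def by (simp add: coeff_sum)
  ultimately have degp: "degree p = m" using le_degree[of p m] by linarith
  have EK: "R x \<noteq> 0" if "norm x > 1" for x
    unfolding R_def using ek[OF a0 am that] .
  have roots: "norm r \<le> 1" if "poly p r = 0" for r
    using EK[of r] that polyp by force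
  have C: "norm (u^m * R (1/u)) \<le> norm (R (cnj u))"
    using cohn[where p=p and u=u, OF roots] nu by (simp add: degp polyp)
  have "R (cnj u) = cnj (R u)" unfolding R_def by simp
  then have C2: "norm u ^ m * norm (R (1/u)) \<le> norm (R u)"
    using C by (simp add: norm_mult norm_power)
  have Ru: "norm (R u) > 0" using EK[OF nu] by simp
  have "norm u * norm (R u) = norm (R (1/u)) / norm u"
    using arg_cong[OF eqR, of norm] by (simp add: norm_mult norm_divide)
  also have "\<dots> \<le> (norm (R u) / norm u ^ m) / norm u"
  proof -
    have pm: "norm u ^ m > 0" using nu by (intro zero_less_power) auto
    have "norm (R (1/u)) \<le> norm (R u) / norm u ^ m"
      using C2 by (simp add: pos_le_divide_eq[OF pm] mult.commute)
    then show ?thesis using nu by (intro divide_right_mono) simp_all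
  qed
  finally have "norm u * norm (R u) \<le> norm (R u) / norm u ^ Suc m"
    by (simp add: field_simps)
  then have "norm u * norm u ^ Suc m * norm (R u) \<le> 1 * norm (R u)"
  proof -
    assume a: "norm u * norm (R u) \<le> norm (R u) / norm u ^ Suc m"
    have pm: "norm u ^ Suc m > 0" using nu by (intro zero_less_power) auto
    from a have "norm u * norm (R u) * norm u ^ Suc m \<le> norm (R u)"
      by (simp only: pos_le_divide_eq[OF pm])
    then show ?thesis by (simp only: mult.commute mult.left_commute mult_1)
  qed
  then have "norm u * norm u ^ Suc m \<le> 1"
    using Ru mult_le_cancel_right by blast
  moreover have "1 < norm u * norm u ^ Suc m"
  proof -
    have "1 \<le> norm u ^ Suc m" using nu by (intro one_le_power) simp
    then show ?thesis using nu by (metis less_1_mult order.not_eq_order_implies_strict mult.right_neutral)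
  qed
  ultimately show False by simp
qed

lemma sine_sum_real_zeros:
  fixes a :: "nat \<Rightarrow> real" and h :: real and w :: complex
  assumes a0: "0 < a 0" and am: "\<And>j. j < m \<Longrightarrow> a j \<le> a (Suc j)" and h: "h > 0"
    and S0: "(\<Sum>j<Suc m. of_real (a j) * sin (of_real (h * real (Suc j)) * w)) = 0"
  shows "Im w = 0"
proof (rule ccontr)
  assume "Im w \<noteq> 0"
  then consider "Im w < 0" | "Im (-w) < 0" by fastforce
  then show False
  proof cases
    case 1 then show ?thesis using sine_sum_nonzero_lower[OF a0 am h] S0 by blast
  next
    case 2
    have neg: "(\<Sum>j<Suc m. of_real (a j) * sin (of_real (h * real (Suc j)) * (-w)))
        = - (\<Sum>j<Suc m. of_real (a j) * sin (of_real (h * real (Suc j)) * w))"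
      by (simp only: mult_minus_right sin_minus sum_negf[symmetric])
    have "(\<Sum>j<Suc m. of_real (a j) * sin (of_real (h * real (Suc j)) * (-w))) = 0"
      by (simp only: neg S0 minus_zero)
    then show ?thesis using sine_sum_nonzero_lower[OF a0 am h 2] by blast
  qed
qed



definition Phi :: "(real \<Rightarrow> real) \<Rightarrow> complex \<Rightarrow> complex" where
  "Phi \<omega> w = integral {0..pi/2} (\<lambda>\<theta>. complex_of_real (\<omega> \<theta>) * sin (w * complex_of_real (cos \<theta>)))"

definition adm :: "(real \<Rightarrow> real) \<Rightarrow> bool" where
  "adm \<omega> \<longleftrightarrow> continuous_on {0..pi/2} \<omega> \<and> \<omega> 0 \<ge> 0 \<and> \<omega> (pi/2) > 0 \<and>
     (\<forall>a b. 0 < a \<longrightarrow> a \<le> b \<longrightarrow> b \<le> pi/2 \<longrightarrow> \<omega> b / sin b \<le> \<omega> a / sin a)"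

definition TT :: "nat \<Rightarrow> nat \<Rightarrow> real" where "TT N k = arccos (real (N - k) / real N)"
definition dN :: "(real \<Rightarrow> real) \<Rightarrow> nat \<Rightarrow> nat \<Rightarrow> real" where
  "dN \<omega> N k = integral {TT N k..TT N (Suc k)} \<omega>"
definition SN :: "(real \<Rightarrow> real) \<Rightarrow> nat \<Rightarrow> complex \<Rightarrow> complex" where
  "SN \<omega> N w = (\<Sum>k<N. complex_of_real (dN \<omega> N k) * sin (w * of_real (real (N - k) / real N)))"

lemma chain_le:
  fixes t :: "nat \<Rightarrow> real"
  assumes "\<And>k. k < N \<Longrightarrow> t k \<le> t (Suc k)" "n \<le> N"
  shows "t 0 \<le> t n"
  using assms(2)
proof (induction n)
  case 0 then show ?case by simp
next
  case (Suc n) then show ?case using assms(1)[of n] by simp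
qed

lemma integral_split_sum:
  fixes f :: "real \<Rightarrow> 'a::banach"
  assumes "\<And>k. k < N \<Longrightarrow> t k \<le> t (Suc k)" "f integrable_on {t 0..t N}"
  shows "integral {t 0..t N} f = (\<Sum>k<N. integral {t k..t (Suc k)} f)"
  using assms
proof (induction N)
  case 0
  then show ?case by simp
next
  case (Suc N)
  have tN: "t N \<le> t (Suc N)" using Suc.prems(1) by simp
  have le: "t 0 \<le> t N" using chain_le[of "Suc N" t N] Suc.prems(1) by simp
  have int: "f integrable_on {t 0..t N}"
    using Suc.prems(2) by (rule integrable_subinterval_real) (use tN in auto)
  have IH: "integral {t 0..t N} f = (\<Sum>k<N. integral {t k..t (Suc k)} f)"
    using Suc.IH[OF _ int] Suc.prems(1) by simp
  have "integral {t 0..t (Suc N)} f = integral {t 0..t N} f + integral {t N..t (Suc N)} f"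
    using Henstock_Kurzweil_Integration.integral_combine[OF le tN Suc.prems(2)] by simp
  then show ?case using IH by simp
qed

lemma sin_lip:
  fixes w :: complex
  assumes "\<bar>c\<bar> \<le> 1" "\<bar>d\<bar> \<le> 1"
  shows "norm (sin (w * of_real c) - sin (w * of_real d)) \<le> exp (norm w) * (norm w * \<bar>c - d\<bar>)"
proof -
  have "norm (sin (w * of_real c) - sin (w * of_real d)) \<le> exp (norm w) * norm (w * of_real c - w * of_real d)"
  proof (rule field_differentiable_bound[where S="cball (0::complex) (norm w)" and f'=cos])
    show "convex (cball (0::complex) (norm w))" by (rule convex_cball)
    show "(sin has_field_derivative cos z) (at z within cball (0::complex) (norm w))" for z
      by (rule DERIV_sin[THEN has_field_derivative_at_within])
    show "norm (cos z) \<le> exp (norm w)" if "z \<in> cball (0::complex) (norm w)" for z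
      using that norm_cos_le[of z] by (simp add: order_trans)
    show "w * of_real c \<in> cball (0::complex) (norm w)" using assms(1)
      by (simp add: norm_mult mult_left_le)
    show "w * of_real d \<in> cball (0::complex) (norm w)" using assms(2)
      by (simp add: norm_mult mult_left_le)
  qed
  also have "norm (w * of_real c - w * of_real d) = norm w * \<bar>c - d\<bar>"
    by (simp add: norm_mult flip: right_diff_distrib of_real_diff)
  finally show ?thesis .
qed

lemma adm_nonneg:
  assumes "adm \<omega>" "0 \<le> \<theta>" "\<theta> \<le> pi/2"
  shows "\<omega> \<theta> \<ge> \<omega> (pi/2) * sin \<theta>"
proof (cases "\<theta> = 0")
  case True then show ?thesis using assms by (simp add: adm_def)
next
  case False
  then have t0: "\<theta> > 0" using assms by simp
  have s0: "sin \<theta> > 0" using t0 assms by (intro sin_gt_zero) auto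
  have "\<omega> (pi/2) / sin (pi/2) \<le> \<omega> \<theta> / sin \<theta>"
    using assms(1) t0 assms(3) unfolding adm_def by blast
  then show ?thesis using s0 by (simp add: pos_le_divide_eq mult.commute)
qed

lemma adm_nonneg':
  assumes "adm \<omega>" "0 \<le> \<theta>" "\<theta> \<le> pi/2"
  shows "\<omega> \<theta> \<ge> 0"
proof -
  have "sin \<theta> \<ge> 0" using assms by (intro sin_ge_zero) auto
  moreover have "\<omega> (pi/2) > 0" using assms by (simp add: adm_def)
  ultimately show ?thesis using adm_nonneg[OF assms] by (smt (verit) mult_nonneg_nonneg)
qed

lemma TT_props:
  assumes "N > 0" "k \<le> N"
  shows "TT N k \<ge> 0" "TT N k \<le> pi/2" "cos (TT N k) = real (N - k) / real N"
proof -
  have y0: "0 \<le> real (N - k) / real N" by simp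
  have y1: "real (N - k) / real N \<le> 1" using assms by auto
  have y: "-1 \<le> real (N - k) / real N" "0 \<le> real (N - k) / real N" "real (N - k) / real N \<le> 1"
    using y0 y1 by linarith+
  then show "TT N k \<ge> 0" "TT N k \<le> pi/2" "cos (TT N k) = real (N - k) / real N"
    unfolding TT_def using arccos_lbound[OF y(1,3)] arccos_le_pi2[OF y(2,3)] cos_arccos[OF y(1,3)] by auto
qed

lemma TT_mono:
  assumes "N > 0" "k < N"
  shows "TT N k \<le> TT N (Suc k)"
proof -
  have y0: "0 \<le> real (N - Suc k) / real N" by simp
  have "-1 \<le> real (N - Suc k) / real N" using y0 by linarith
  moreover have "real (N - k) / real N \<le> 1" using assms by auto
  moreover have "real (N - Suc k) / real N \<le> real (N - k) / real N"
    using assms by (intro divide_right_mono) auto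
  ultimately show ?thesis unfolding TT_def by (intro arccos_le_arccos)
qed

lemma TT_0 [simp]: "N > 0 \<Longrightarrow> TT N 0 = 0" by (simp add: TT_def)
lemma TT_N [simp]: "TT N N = pi/2" by (simp add: TT_def)

lemma cos_in_TT:
  assumes "N > 0" "k < N" "\<theta> \<in> {TT N k..TT N (Suc k)}"
  shows "\<bar>cos \<theta> - real (N - k) / real N\<bar> \<le> 1 / real N" "\<bar>cos \<theta>\<bar> \<le> 1"
proof -
  have a: "0 \<le> TT N k" "TT N (Suc k) \<le> pi/2" using TT_props assms by auto
  have "cos \<theta> \<le> cos (TT N k)" using assms a by (intro cos_monotone_0_pi_le) auto
  moreover have "cos (TT N (Suc k)) \<le> cos \<theta>" using assms a by (intro cos_monotone_0_pi_le) auto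
  ultimately have "cos \<theta> \<le> real (N - k) / real N" "real (N - Suc k) / real N \<le> cos \<theta>"
    using TT_props assms by auto
  moreover have "real (N - k) / real N - real (N - Suc k) / real N = 1 / real N"
    using assms by (simp add: diff_divide_distrib[symmetric] of_nat_diff)
  ultimately show "\<bar>cos \<theta> - real (N - k) / real N\<bar> \<le> 1 / real N" by linarith
  show "\<bar>cos \<theta>\<bar> \<le> 1" by simp
qed

lemma TT_sub:
  assumes "N > 0" "k < N"
  shows "{TT N k..TT N (Suc k)} \<subseteq> {0..pi/2}"
  using TT_props[OF assms(1), of k] TT_props[OF assms(1), of "Suc k"] assms by auto

lemma adm_cont: "adm \<omega> \<Longrightarrow> continuous_on {0..pi/2} \<omega>" by (simp add: adm_def)

lemma cont_g:
  assumes "continuous_on {0..pi/2} \<omega>"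
  shows "continuous_on {0..pi/2} (\<lambda>\<theta>. complex_of_real (\<omega> \<theta>) * sin (w * complex_of_real (cos \<theta>)))"
  by (intro continuous_intros assms)

lemma integral_of_real_cont:
  fixes f :: "real \<Rightarrow> real"
  assumes "f integrable_on S"
  shows "integral S (\<lambda>x. complex_of_real (f x)) = of_real (integral S f)"
  using has_integral_of_real[OF integrable_integral[OF assms]] by (rule integral_unique)

lemma Phi_split:
  assumes "continuous_on {0..pi/2} \<omega>" "N > 0"
  shows "Phi \<omega> w = (\<Sum>k<N. integral {TT N k..TT N (Suc k)}
            (\<lambda>\<theta>. complex_of_real (\<omega> \<theta>) * sin (w * complex_of_real (cos \<theta>))))"
proof -
  have "integral {TT N 0..TT N N} (\<lambda>\<theta>. complex_of_real (\<omega> \<theta>) * sin (w * complex_of_real (cos \<theta>)))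
     = (\<Sum>k<N. integral {TT N k..TT N (Suc k)}
            (\<lambda>\<theta>. complex_of_real (\<omega> \<theta>) * sin (w * complex_of_real (cos \<theta>))))"
    by (rule integral_split_sum) (use TT_mono assms integrable_continuous_interval[OF cont_g[OF assms(1)]] in auto)
  then show ?thesis using assms by (simp add: Phi_def)
qed

lemma omega_split:
  assumes "continuous_on {0..pi/2} \<omega>" "N > 0"
  shows "integral {0..pi/2} \<omega> = (\<Sum>k<N. dN \<omega> N k)"
proof -
  have "integral {TT N 0..TT N N} \<omega> = (\<Sum>k<N. integral {TT N k..TT N (Suc k)} \<omega>)"
    by (rule integral_split_sum) (use TT_mono assms integrable_continuous_interval[OF assms(1)] in auto)
  then show ?thesis using assms by (simp add: dN_def)
qed

lemma approx_bound:
  assumes adm: "adm \<omega>" and N: "N > 0"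
  shows "norm (Phi \<omega> w - SN \<omega> N w) \<le> integral {0..pi/2} \<omega> * (exp (norm w) * (norm w / real N))"
proof -
  define C where "C = exp (norm w) * (norm w / real N)"
  define g where "g = (\<lambda>\<theta>. complex_of_real (\<omega> \<theta>) * sin (w * complex_of_real (cos \<theta>)))"
  define q where "q k = real (N - k) / real N" for k
  define h where "h k = (\<lambda>\<theta>. complex_of_real (\<omega> \<theta>) * sin (w * complex_of_real (q k)))" for k
  have cont: "continuous_on {0..pi/2} \<omega>" using adm by (simp add: adm_def)
  have intg: "g integrable_on {TT N k..TT N (Suc k)}" if "k < N" for k
    unfolding g_def by (rule integrable_continuous_interval, rule continuous_on_subset[OF cont_g[OF cont]])
       (use TT_sub[OF N that] in auto)
  have into: "\<omega> integrable_on {TT N k..TT N (Suc k)}" if "k < N" for k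
    by (rule integrable_continuous_interval, rule continuous_on_subset[OF cont])
       (use TT_sub[OF N that] in auto)
  have inth: "h k integrable_on {TT N k..TT N (Suc k)}" if "k < N" for k
  proof -
    have "(\<lambda>\<theta>. complex_of_real (\<omega> \<theta>)) integrable_on {TT N k..TT N (Suc k)}"
      using has_integral_of_real[OF integrable_integral[OF into[OF that]]] by blast
    then show ?thesis unfolding h_def by (rule integrable_on_mult_left)
  qed
  have SNeq: "SN \<omega> N w = (\<Sum>k<N. integral {TT N k..TT N (Suc k)} (h k))"
    unfolding SN_def h_def q_def dN_def
    by (intro sum.cong refl) (simp add: integral_of_real_cont into)
  have "Phi \<omega> w - SN \<omega> N w = (\<Sum>k<N. integral {TT N k..TT N (Suc k)} (\<lambda>\<theta>. g \<theta> - h k \<theta>))"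
    unfolding Phi_split[OF cont N] SNeq g_def[symmetric] sum_subtractf[symmetric]
    by (intro sum.cong refl) (simp add: integral_diff intg inth)
  also have "norm \<dots> \<le> (\<Sum>k<N. norm (integral {TT N k..TT N (Suc k)} (\<lambda>\<theta>. g \<theta> - h k \<theta>)))"
    by (rule norm_sum)
  also have "\<dots> \<le> (\<Sum>k<N. integral {TT N k..TT N (Suc k)} (\<lambda>\<theta>. \<omega> \<theta> * C))"
  proof (rule sum_mono)
    fix k assume k: "k \<in> {..<N}"
    show "norm (integral {TT N k..TT N (Suc k)} (\<lambda>\<theta>. g \<theta> - h k \<theta>)) \<le> integral {TT N k..TT N (Suc k)} (\<lambda>\<theta>. \<omega> \<theta> * C)"
    proof (rule integral_norm_bound_integral)
      show "(\<lambda>\<theta>. g \<theta> - h k \<theta>) integrable_on {TT N k..TT N (Suc k)}"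
        using intg inth k by (intro integrable_diff) auto
      show "(\<lambda>\<theta>. \<omega> \<theta> * C) integrable_on {TT N k..TT N (Suc k)}"
        using into k by (intro integrable_on_mult_left) auto
      fix \<theta> assume th: "\<theta> \<in> {TT N k..TT N (Suc k)}"
      have k': "k < N" using k by simp
      have th': "0 \<le> \<theta>" "\<theta> \<le> pi/2" using TT_sub[OF N k'] th by auto
      have om: "\<omega> \<theta> \<ge> 0" using adm_nonneg'[OF adm th'] .
      have q1: "\<bar>q k\<bar> \<le> 1" using k' unfolding q_def by auto
      have "norm (g \<theta> - h k \<theta>) = \<omega> \<theta> * norm (sin (w * complex_of_real (cos \<theta>)) - sin (w * complex_of_real (q k)))"
        unfolding g_def h_def using om by (simp add: norm_mult flip: right_diff_distrib)
      also have "\<dots> \<le> \<omega> \<theta> * (exp (norm w) * (norm w * \<bar>cos \<theta> - q k\<bar>))"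
        using sin_lip[OF _ q1, of "cos \<theta>" w] om by (intro mult_left_mono) auto
      also have "\<dots> \<le> \<omega> \<theta> * C"
        unfolding C_def using om cos_in_TT(1)[OF N k' th]
        by (intro mult_left_mono) (auto simp: q_def divide_inverse intro!: mult_left_mono)
      finally show "norm (g \<theta> - h k \<theta>) \<le> \<omega> \<theta> * C" .
    qed
  qed
  also have "\<dots> = (\<Sum>k<N. dN \<omega> N k) * C"
    unfolding dN_def sum_distrib_right by (intro sum.cong refl) simp
  also have "\<dots> = integral {0..pi/2} \<omega> * C" using omega_split[OF cont N] by simp
  finally show ?thesis unfolding C_def .
qed

definition BB :: "(real \<Rightarrow> real) \<Rightarrow> real \<Rightarrow> real" where
  "BB \<omega> t = integral {0..arccos t} \<omega>"

definition GG :: "(real \<Rightarrow> real) \<Rightarrow> real \<Rightarrow> real" where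
  "GG \<omega> t = \<omega> (arccos t) / sin (arccos t)"

lemma BB_cont:
  assumes "continuous_on {0..pi/2} \<omega>"
  shows "continuous_on {0..1} (BB \<omega>)"
proof -
  have c1: "continuous_on {0..pi/2} (\<lambda>x. integral {0..x} \<omega>)"
    by (rule indefinite_integral_continuous_1, rule integrable_continuous_interval[OF assms])
  have c2: "continuous_on {0..1} arccos"
    by (rule continuous_on_subset[OF continuous_on_arccos']) auto
  have "arccos ` {0..1} \<subseteq> {0..pi/2}"
  proof (rule image_subsetI)
    fix x :: real assume "x \<in> {0..1}"
    then show "arccos x \<in> {0..pi/2}" using arccos_lbound[of x] arccos_le_pi2[of x] by auto
  qed
  then show ?thesis unfolding BB_def
    using continuous_on_compose[OF c2 continuous_on_subset[OF c1]] by (simp add: o_def)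
qed

lemma BB_deriv:
  assumes "continuous_on {0..pi/2} \<omega>" "0 < t" "t < 1"
  shows "DERIV (BB \<omega>) t :> - GG \<omega> t"
proof -
  have ab: "0 < arccos t" "arccos t < pi/2"
    using arccos_lt_bounded[of t] assms arccos_less_arccos[of 0 t] by auto
  have "((\<lambda>x. integral {0..x} \<omega>) has_real_derivative \<omega> (arccos t)) (at (arccos t) within {0..pi/2})"
    by (rule integral_has_real_derivative[OF assms(1)]) (use ab in auto)
  then have d1: "((\<lambda>x. integral {0..x} \<omega>) has_real_derivative \<omega> (arccos t)) (at (arccos t))"
    using at_within_interior[of "arccos t" "{0..pi/2}"] ab by simp
  have d2: "DERIV arccos t :> inverse (- sqrt (1 - t\<^sup>2))"
    using assms by (intro DERIV_arccos) auto
  have "DERIV ((\<lambda>x. integral {0..x} \<omega>) \<circ> arccos) t :> \<omega> (arccos t) * inverse (- sqrt (1 - t\<^sup>2))"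
    by (rule DERIV_chain[OF d1 d2])
  moreover have "sin (arccos t) = sqrt (1 - t\<^sup>2)" using assms by (intro sin_arccos) auto
  ultimately show ?thesis unfolding BB_def GG_def by (simp add: o_def divide_inverse)
qed

lemma dN_BB:
  assumes "continuous_on {0..pi/2} \<omega>" "N > 0" "k < N"
  shows "dN \<omega> N k = BB \<omega> (real (N - Suc k) / real N) - BB \<omega> (real (N - k) / real N)"
proof -
  have a: "0 \<le> TT N k" "TT N k \<le> TT N (Suc k)" "TT N (Suc k) \<le> pi/2"
    using TT_props[OF assms(2)] TT_mono[OF assms(2,3)] assms by auto
  have int: "\<omega> integrable_on {0..TT N (Suc k)}"
    by (rule integrable_continuous_interval, rule continuous_on_subset[OF assms(1)]) (use a in auto)
  have "integral {0..TT N k} \<omega> + integral {TT N k..TT N (Suc k)} \<omega> = integral {0..TT N (Suc k)} \<omega>"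
    by (rule Henstock_Kurzweil_Integration.integral_combine[OF a(1,2) int])
  then show ?thesis unfolding dN_def BB_def TT_def by simp
qed

lemma dN_mvt:
  assumes cont: "continuous_on {0..pi/2} \<omega>" and N: "N > 0" and k: "k < N"
  shows "\<exists>z. real (N - Suc k) / real N < z \<and> z < real (N - k) / real N \<and> dN \<omega> N k = GG \<omega> z / real N"
proof -
  define a where "a = real (N - Suc k) / real N"
  define b where "b = real (N - k) / real N"
  have ab: "b - a = 1 / real N" unfolding a_def b_def using k
    by (simp add: diff_divide_distrib[symmetric] of_nat_diff)
  have a0: "0 \<le> a" unfolding a_def by simp
  have b1: "b \<le> 1" unfolding b_def using N by auto
  have "1 / real N > 0" using N by simp
  then have alb: "a < b" using ab by linarith
  obtain l z where z: "a < z" "z < b" "DERIV (BB \<omega>) z :> l" "BB \<omega> b - BB \<omega> a = (b - a) * l"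
    using MVT[OF alb, of "BB \<omega>"] continuous_on_subset[OF BB_cont[OF cont], of "{a..b}"] a0 b1
      BB_deriv[OF cont] real_differentiable_def
    by (smt (verit) atLeastAtMost_iff subsetI)
  have "l = - GG \<omega> z" using DERIV_unique[OF z(3) BB_deriv[OF cont]] z a0 b1 by simp
  then have "dN \<omega> N k = GG \<omega> z / real N"
    using dN_BB[OF cont N k] z(4) ab unfolding a_def[symmetric] b_def[symmetric] by simp
  then show ?thesis using z unfolding a_def b_def by blast
qed

lemma GG_anti:
  assumes adm: "adm \<omega>" and "0 < x" "x \<le> y" "y < 1"
  shows "GG \<omega> x \<le> GG \<omega> y"
proof -
  have "0 < arccos y" using arccos_lt_bounded[of y] assms by auto
  moreover have "arccos y \<le> arccos x" using assms by (intro arccos_le_arccos) auto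
  moreover have "arccos x \<le> pi/2" using assms by (intro arccos_le_pi2) auto
  ultimately show ?thesis using adm unfolding adm_def GG_def by blast
qed

lemma GG_pos:
  assumes adm: "adm \<omega>" and "0 < x" "x < 1"
  shows "GG \<omega> x \<ge> \<omega> (pi/2)"
proof -
  have "0 < arccos x" using arccos_lt_bounded[of x] assms by auto
  moreover have "arccos x \<le> pi/2" using assms by (intro arccos_le_pi2) auto
  ultimately have "\<omega> (pi/2) / sin (pi/2) \<le> GG \<omega> x" using adm unfolding adm_def GG_def by blast
  then show ?thesis by simp
qed

lemma SN_poly_form:
  assumes "N > 0"
  shows "SN \<omega> N w = (\<Sum>j<N. of_real (dN \<omega> N (N - Suc j)) * sin (of_real ((1 / real N) * real (Suc j)) * w))"
  unfolding SN_def
  apply (subst sum.nat_diff_reindex[symmetric])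
  apply (intro sum.cong refl)
  apply (auto simp: of_nat_diff Suc_diff_Suc algebra_simps)
  done

lemma SN_real_zeros:
  assumes adm: "adm \<omega>" and N: "N > 0" and S0: "SN \<omega> N w = 0"
  shows "Im w = 0"
proof -
  have cont: "continuous_on {0..pi/2} \<omega>" using adm by (simp add: adm_def)
  obtain m where m: "N = Suc m" using N gr0_conv_Suc by blast
  define a where "a j = dN \<omega> N (N - Suc j)" for j
  have a0: "0 < a 0"
  proof -
    obtain z where z: "real (N - Suc (N - 1)) / real N < z" "z < real (N - (N - 1)) / real N"
        "dN \<omega> N (N - 1) = GG \<omega> z / real N"
      using dN_mvt[OF cont N, of "N - 1"] N by auto
    have "real (N - (N - 1)) / real N = 1 / real N" using N by simp
    moreover have "1 / real N \<le> 1" using N by simp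
    ultimately have z01: "0 < z" "z < 1" using z(1,2) N by (auto, linarith)
    have "GG \<omega> z > 0" using GG_pos[OF adm z01] adm by (simp add: adm_def)
    then show ?thesis using z(3) N unfolding a_def by simp
  qed
  have am: "a j \<le> a (Suc j)" if "j < m" for j
  proof -
    define k where "k = N - Suc (Suc j)"
    have k: "k < N" "Suc k < N" using that m unfolding k_def by auto
    have e1: "a j = dN \<omega> N (Suc k)" unfolding a_def k_def using that m by (simp add: Suc_diff_Suc)
    have e2: "a (Suc j) = dN \<omega> N k" unfolding a_def k_def by simp
    obtain z1 where z1: "real (N - Suc (Suc k)) / real N < z1" "z1 < real (N - Suc k) / real N"
        "dN \<omega> N (Suc k) = GG \<omega> z1 / real N"
      using dN_mvt[OF cont N k(2)] by blast
    obtain z0 where z0: "real (N - Suc k) / real N < z0" "z0 < real (N - k) / real N"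
        "dN \<omega> N k = GG \<omega> z0 / real N"
      using dN_mvt[OF cont N k(1)] by blast
    have "0 \<le> real (N - Suc (Suc k)) / real N" by simp
    then have "0 < z1" using z1(1) by linarith
    moreover have "z1 \<le> z0" using z1(2) z0(1) by simp
    moreover have "z0 < 1" using z0(2) N by (smt (verit) diff_le_self divide_le_eq_1_pos of_nat_0_less_iff of_nat_le_iff)
    ultimately have "GG \<omega> z1 \<le> GG \<omega> z0" by (intro GG_anti[OF adm])
    then show ?thesis using e1 e2 z1(3) z0(3) N by (simp add: divide_right_mono)
  qed
  have "(\<Sum>j<Suc m. of_real (a j) * sin (of_real ((1 / real N) * real (Suc j)) * w)) = 0"
    using S0 SN_poly_form[OF N] m unfolding a_def by simp
  moreover have "(1 / real N) > 0" using N by simp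
  ultimately show ?thesis using sine_sum_real_zeros[OF a0 am, where h="1 / real N" and w=w] by blast
qed



lemma FTC_real:
  fixes F f :: "real \<Rightarrow> real"
  assumes "a \<le> b" "\<And>x. DERIV F x :> f x"
  shows "integral {a..b} f = F b - F a"
proof -
  have "(f has_integral (F b - F a)) {a..b}"
    by (rule fundamental_theorem_of_calculus[OF assms(1)])
       (use assms(2) in \<open>auto simp: has_real_derivative_iff_has_vector_derivative[symmetric] intro: has_field_derivative_at_within\<close>)
  then show ?thesis by (rule integral_unique)
qed

lemma Psi1:
  assumes "x \<noteq> 0"
  shows "integral {0..pi/2} (\<lambda>\<theta>. sin \<theta> * sin (x * cos \<theta>)) = (1 - cos x) / x"
proof -
  have "integral {0..pi/2} (\<lambda>\<theta>. sin \<theta> * sin (x * cos \<theta>)) = cos (x * cos (pi/2)) / x - cos (x * cos 0) / x"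
  proof (rule FTC_real)
    fix \<theta> :: real
    show "DERIV (\<lambda>\<theta>. cos (x * cos \<theta>) / x) \<theta> :> sin \<theta> * sin (x * cos \<theta>)"
      using assms by (auto intro!: derivative_eq_intros simp: field_simps)
  qed simp
  then show ?thesis by (simp add: diff_divide_distrib)
qed

lemma Phi_real:
  assumes "continuous_on {0..pi/2} \<omega>"
  shows "Phi \<omega> (of_real x) = of_real (integral {0..pi/2} (\<lambda>\<theta>. \<omega> \<theta> * sin (x * cos \<theta>)))"
proof -
  have "Phi \<omega> (of_real x) = integral {0..pi/2} (\<lambda>\<theta>. complex_of_real (\<omega> \<theta> * sin (x * cos \<theta>)))"
    unfolding Phi_def by (simp flip: sin_of_real)
  also have "\<dots> = of_real (integral {0..pi/2} (\<lambda>\<theta>. \<omega> \<theta> * sin (x * cos \<theta>)))"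
    by (rule integral_of_real_cont, rule integrable_continuous_interval)
       (intro continuous_intros assms)
  finally show ?thesis .
qed

lemma Phi_lower:
  assumes adm: "adm \<omega>" and x: "0 < x" "x \<le> pi"
  shows "integral {0..pi/2} (\<lambda>\<theta>. \<omega> \<theta> * sin (x * cos \<theta>)) \<ge> \<omega> (pi/2) * ((1 - cos x) / x)"
proof -
  have cont: "continuous_on {0..pi/2} \<omega>" using adm by (simp add: adm_def)
  have "\<omega> (pi/2) * ((1 - cos x) / x) = integral {0..pi/2} (\<lambda>\<theta>. \<omega> (pi/2) * (sin \<theta> * sin (x * cos \<theta>)))"
    using Psi1[of x] x by simp
  also have "\<dots> \<le> integral {0..pi/2} (\<lambda>\<theta>. \<omega> \<theta> * sin (x * cos \<theta>))"
  proof (rule integral_le)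
    show "(\<lambda>\<theta>. \<omega> (pi/2) * (sin \<theta> * sin (x * cos \<theta>))) integrable_on {0..pi/2}"
      by (rule integrable_continuous_interval) (intro continuous_intros)
    show "(\<lambda>\<theta>. \<omega> \<theta> * sin (x * cos \<theta>)) integrable_on {0..pi/2}"
      by (rule integrable_continuous_interval) (intro continuous_intros cont)
    fix \<theta> assume th: "\<theta> \<in> {0..pi/2}"
    have c: "0 \<le> cos \<theta>" "cos \<theta> \<le> 1" using th by (auto intro: cos_ge_zero)
    have "0 \<le> x * cos \<theta>" using x c by simp
    moreover have "x * cos \<theta> \<le> pi" using x c by (smt (verit) mult_left_le)
    ultimately have "sin (x * cos \<theta>) \<ge> 0" by (intro sin_ge_zero)
    then show "\<omega> (pi/2) * (sin \<theta> * sin (x * cos \<theta>)) \<le> \<omega> \<theta> * sin (x * cos \<theta>)"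
      using adm_nonneg[OF adm, of \<theta>] th by (simp add: mult.assoc[symmetric] mult_right_mono)
  qed
  finally show ?thesis .
qed

lemma Phi_pos:
  assumes adm: "adm \<omega>" and x: "0 < x" "x \<le> pi"
  shows "Re (Phi \<omega> (of_real x)) > 0" "Im (Phi \<omega> (of_real x)) = 0"
proof -
  have cont: "continuous_on {0..pi/2} \<omega>" using adm by (simp add: adm_def)
  have "cos x < 1" using x cos_monotone_0_pi[of 0 x] by (smt (verit) cos_zero)
  then have "\<omega> (pi/2) * ((1 - cos x) / x) > 0" using adm x by (simp add: adm_def)
  then show "Re (Phi \<omega> (of_real x)) > 0" using Phi_lower[OF assms] Phi_real[OF cont, of x] by simp
  show "Im (Phi \<omega> (of_real x)) = 0" using Phi_real[OF cont, of x] by simp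
qed

lemma Phi_0: "Phi \<omega> 0 = 0" by (simp add: Phi_def)

lemma Phi_neg: "Phi \<omega> (-w) = - Phi \<omega> w"
  by (simp add: Phi_def)

lemma SN_holo: "SN \<omega> N holomorphic_on S"
  unfolding SN_def by (intro holomorphic_intros)

lemma SN_ulim:
  assumes adm: "adm \<omega>" and K: "compact K"
  shows "uniform_limit K (\<lambda>n. SN \<omega> (Suc n)) (Phi \<omega>) sequentially"
proof -
  obtain M where M: "\<And>w. w \<in> K \<Longrightarrow> norm w \<le> M"
    using compact_imp_bounded[OF K] bounded_iff by blast
  define I where "I = integral {0..pi/2} \<omega>"
  have cont: "continuous_on {0..pi/2} \<omega>" using adm by (simp add: adm_def)
  have I0: "I \<ge> 0" unfolding I_def
    by (rule integral_nonneg) (use integrable_continuous_interval[OF cont] adm_nonneg'[OF adm] in auto)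
  define M' where "M' = max M 0"
  have lim: "(\<lambda>n. I * exp M' * M' / real (Suc n)) \<longlonglongrightarrow> 0"
    using LIMSEQ_Suc[OF lim_const_over_n[of "I * exp M' * M'"]] by simp
  show ?thesis
  proof (rule uniform_limitI)
    fix e :: real assume e: "e > 0"
    have ev: "\<forall>\<^sub>F n in sequentially. I * exp M' * M' / real (Suc n) < e"
      using order_tendstoD(2)[OF lim e] .
    show "\<forall>\<^sub>F n in sequentially. \<forall>w\<in>K. dist (SN \<omega> (Suc n) w) (Phi \<omega> w) < e"
    proof (rule eventually_mono[OF ev], intro ballI)
      fix n w assume n: "I * exp M' * M' / real (Suc n) < e" and w: "w \<in> K"
      have nw: "norm w \<le> M'" using M[OF w] unfolding M'_def by simp
      have "dist (SN \<omega> (Suc n) w) (Phi \<omega> w) = norm (Phi \<omega> w - SN \<omega> (Suc n) w)"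
        by (simp add: dist_norm norm_minus_commute)
      also have "\<dots> \<le> I * (exp (norm w) * (norm w / real (Suc n)))"
        using approx_bound[OF adm, of "Suc n" w] unfolding I_def by simp
      also have "\<dots> \<le> I * (exp M' * (M' / real (Suc n)))"
        using nw I0 by (intro mult_left_mono mult_mono divide_right_mono) auto
      also have "\<dots> < e" using n by simp
      finally show "dist (SN \<omega> (Suc n) w) (Phi \<omega> w) < e" .
    qed
  qed
qed

lemma Phi_holo:
  assumes adm: "adm \<omega>"
  shows "Phi \<omega> holomorphic_on UNIV"
proof (rule holomorphic_uniform_sequence[where f="\<lambda>n. SN \<omega> (Suc n)"])
  show "open (UNIV :: complex set)" by simp
  show "SN \<omega> (Suc n) holomorphic_on UNIV" for n by (rule SN_holo)
  fix x :: complex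
  show "\<exists>d>0. cball x d \<subseteq> UNIV \<and> uniform_limit (cball x d) (\<lambda>n. SN \<omega> (Suc n)) (Phi \<omega>) sequentially"
    by (intro exI[of _ 1] conjI) (auto intro: SN_ulim[OF adm])
qed

lemma Phi_real_zeros:
  assumes adm: "adm \<omega>" and z: "Phi \<omega> z = 0"
  shows "Im z = 0"
proof -
  define S where "S = {z::complex. 0 < Im z}"
  have holo: "Phi \<omega> holomorphic_on UNIV" by (rule Phi_holo[OF adm])
  have contP: "isCont (Phi \<omega>) u" for u
    using holo by (metis holomorphic_on_imp_continuous_on continuous_on_eq_continuous_at open_UNIV UNIV_I)
  have nz: "Phi \<omega> z0 \<noteq> 0" if z0: "z0 \<in> S" for z0
  proof (rule Hurwitz_no_zeros[where \<F>="\<lambda>n. SN \<omega> (Suc n)" and S=S and g="Phi \<omega>"])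
    show "open S" unfolding S_def by (rule open_halfspace_Im_gt)
    show "connected S" unfolding S_def by (rule connected_halfspace_Im_gt)
    show "SN \<omega> (Suc n) holomorphic_on S" for n by (rule SN_holo)
    show "Phi \<omega> holomorphic_on S" using holo by (rule holomorphic_on_subset) simp
    show "uniform_limit K (\<lambda>n. SN \<omega> (Suc n)) (Phi \<omega>) sequentially" if "compact K" "K \<subseteq> S" for K
      using SN_ulim[OF adm that(1)] .
    show "SN \<omega> (Suc n) z \<noteq> 0" if "z \<in> S" for n z
      using SN_real_zeros[OF adm, of "Suc n" z] that unfolding S_def by auto
    show "z0 \<in> S" by (rule z0)
    show "\<not> Phi \<omega> constant_on S"
    proof
      assume "Phi \<omega> constant_on S"
      then obtain c where c: "\<And>u. u \<in> S \<Longrightarrow> Phi \<omega> u = c" unfolding constant_on_def by blast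
      have lim_at: "Phi \<omega> (of_real x) = c" for x
      proof -
        have l0: "(\<lambda>n. 1 / (of_nat (Suc n) :: complex)) \<longlonglongrightarrow> 0"
          using LIMSEQ_Suc[OF lim_1_over_n] .
        have "(\<lambda>n. of_real x + \<i> * (1 / of_nat (Suc n))) \<longlonglongrightarrow> of_real x + \<i> * 0"
          by (intro tendsto_intros l0) 
        then have t: "(\<lambda>n. Phi \<omega> (of_real x + \<i> * (1 / of_nat (Suc n)))) \<longlonglongrightarrow> Phi \<omega> (of_real x)"
          using isCont_tendsto_compose[OF contP] by simp
        have "(\<lambda>n. Phi \<omega> (of_real x + \<i> * (1 / of_nat (Suc n)))) = (\<lambda>n. c)"
          by (rule ext, rule c) (simp add: S_def)
        then show ?thesis using t LIMSEQ_unique tendsto_const by metis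
      qed
      have "Phi \<omega> (of_real 0) = Phi \<omega> (of_real (pi/2))" using lim_at[of 0] lim_at[of "pi/2"] by simp
      moreover have "Re (Phi \<omega> (of_real (pi/2))) > 0" by (rule Phi_pos[OF adm]) auto
      ultimately show False using Phi_0[of \<omega>] by simp
    qed
  qed
  show ?thesis
  proof (rule ccontr)
    assume "Im z \<noteq> 0"
    then consider "Im z > 0" | "Im (-z) > 0" by fastforce
    then show False
    proof cases
      case 1 then show ?thesis using nz[of z] z by (simp add: S_def)
    next
      case 2 then show ?thesis using nz[of "-z"] z Phi_neg[of \<omega> z] by (simp add: S_def)
    qed
  qed
qed



definition JJ :: "real \<Rightarrow> nat \<Rightarrow> real" where
  "JJ \<nu> m = integral {0..pi/2} (\<lambda>\<theta>. cos (\<nu> * \<theta>) * cos \<theta> ^ m)"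

lemma JJ_1: "(1 - \<nu>^2) * JJ \<nu> 1 = cos (\<nu> * pi / 2)"
proof -
  have "integral {0..pi/2} (\<lambda>\<theta>. (1 - \<nu>^2) * (cos (\<nu> * \<theta>) * cos \<theta>))
      = (cos (\<nu> * (pi/2)) * sin (pi/2) - \<nu> * sin (\<nu> * (pi/2)) * cos (pi/2))
        - (cos (\<nu> * 0) * sin 0 - \<nu> * sin (\<nu> * 0) * cos 0)"
  proof (rule FTC_real)
    fix \<theta> :: real
    show "DERIV (\<lambda>\<theta>. cos (\<nu> * \<theta>) * sin \<theta> - \<nu> * sin (\<nu> * \<theta>) * cos \<theta>) \<theta> :> (1 - \<nu>^2) * (cos (\<nu> * \<theta>) * cos \<theta>)"
      by (auto intro!: derivative_eq_intros simp: algebra_simps power2_eq_square)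
  qed simp
  then show ?thesis unfolding JJ_def by simp
qed

lemma JJ_rec_aux:
  fixes A B c S P \<nu> k :: real
  assumes "S * S = 1 - c * c"
  shows "(k+2) * ((- \<nu> * B) * (P*c) * S + A * (((k+1) * P * (- S)) * S + (P*c) * c))
       - \<nu> * ((\<nu> * A) * (P*c*c) + B * ((k+2) * (P*c) * (- S)))
     = ((k+2)^2 - \<nu>^2) * (A * (P*c*c)) - (k+2)*(k+1) * (A * P)"
  using assms by algebra

lemma JJ_rec: "((real k+2)^2 - \<nu>^2) * JJ \<nu> (k+2) = (real k+2)*(real k+1) * JJ \<nu> k"
proof -
  define p0 :: "real \<Rightarrow> real" where "p0 \<theta> = cos \<theta> ^ k" for \<theta>
  define p1 :: "real \<Rightarrow> real" where "p1 \<theta> = cos \<theta> ^ k * cos \<theta>" for \<theta>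
  define p2 :: "real \<Rightarrow> real" where "p2 \<theta> = cos \<theta> ^ k * cos \<theta> * cos \<theta>" for \<theta>
  define Q :: "real \<Rightarrow> real" where "Q \<theta> = (real k+2) * cos (\<nu> * \<theta>) * p1 \<theta> * sin \<theta> - \<nu> * sin (\<nu> * \<theta>) * p2 \<theta>" for \<theta>
  have d1: "DERIV p1 \<theta> :> (real k + 1) * p0 \<theta> * (- sin \<theta>)" for \<theta>
  proof -
    have "DERIV (\<lambda>\<theta>. cos \<theta> ^ Suc k) \<theta> :> of_nat (Suc k) * ((- sin \<theta>) * cos \<theta> ^ (Suc k - Suc 0))"
      by (rule DERIV_power[OF DERIV_cos])
    moreover have "(\<lambda>\<theta>. cos \<theta> ^ Suc k) = p1" by (rule ext) (simp add: p1_def)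
    ultimately show ?thesis by (simp add: p0_def algebra_simps)
  qed
  have d2: "DERIV p2 \<theta> :> (real k + 2) * p1 \<theta> * (- sin \<theta>)" for \<theta>
  proof -
    have "DERIV (\<lambda>\<theta>. cos \<theta> ^ Suc (Suc k)) \<theta> :> of_nat (Suc (Suc k)) * ((- sin \<theta>) * cos \<theta> ^ (Suc (Suc k) - Suc 0))"
      by (rule DERIV_power[OF DERIV_cos])
    moreover have "(\<lambda>\<theta>. cos \<theta> ^ Suc (Suc k)) = p2" by (rule ext) (simp add: p2_def algebra_simps)
    ultimately show ?thesis by (simp add: p1_def algebra_simps)
  qed
  have D: "DERIV Q \<theta> :> ((real k+2)^2 - \<nu>^2) * (cos (\<nu> * \<theta>) * p2 \<theta>) - (real k+2)*(real k+1) * (cos (\<nu> * \<theta>) * p0 \<theta>)" for \<theta>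
  proof -
    have "DERIV Q \<theta> :> (real k+2) * ((- \<nu> * sin (\<nu> * \<theta>)) * p1 \<theta> * sin \<theta>
          + cos (\<nu> * \<theta>) * (((real k + 1) * p0 \<theta> * (- sin \<theta>)) * sin \<theta> + p1 \<theta> * cos \<theta>))
        - \<nu> * ((\<nu> * cos (\<nu> * \<theta>)) * p2 \<theta> + sin (\<nu> * \<theta>) * ((real k + 2) * p1 \<theta> * (- sin \<theta>)))"
      unfolding Q_def
      by (auto intro!: derivative_eq_intros d1 d2 simp: algebra_simps)
    moreover have "sin \<theta> * sin \<theta> = 1 - cos \<theta> * cos \<theta>" using sin_squared_eq[of \<theta>] by (simp add: power2_eq_square)
    ultimately show ?thesis
      using JJ_rec_aux[of "sin \<theta>" "cos \<theta>" "real k" \<nu> "sin (\<nu> * \<theta>)" "p0 \<theta>" "cos (\<nu> * \<theta>)"]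
      unfolding p1_def p2_def p0_def by simp
  qed
  have "integral {0..pi/2} (\<lambda>\<theta>. ((real k+2)^2 - \<nu>^2) * (cos (\<nu> * \<theta>) * p2 \<theta>) - (real k+2)*(real k+1) * (cos (\<nu> * \<theta>) * p0 \<theta>))
     = Q (pi/2) - Q 0"
    by (rule FTC_real[OF _ D]) simp
  also have "\<dots> = 0" unfolding Q_def p1_def p2_def by simp
  finally have z: "integral {0..pi/2} (\<lambda>\<theta>. ((real k+2)^2 - \<nu>^2) * (cos (\<nu> * \<theta>) * p2 \<theta>) - (real k+2)*(real k+1) * (cos (\<nu> * \<theta>) * p0 \<theta>)) = 0" .
  have c0: "continuous_on {0..pi/2} (\<lambda>\<theta>. cos (\<nu> * \<theta>) * p0 \<theta>)" unfolding p0_def by (intro continuous_intros)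
  have c2: "continuous_on {0..pi/2} (\<lambda>\<theta>. cos (\<nu> * \<theta>) * p2 \<theta>)" unfolding p2_def by (intro continuous_intros)
  have "integral {0..pi/2} (\<lambda>\<theta>. ((real k+2)^2 - \<nu>^2) * (cos (\<nu> * \<theta>) * p2 \<theta>) - (real k+2)*(real k+1) * (cos (\<nu> * \<theta>) * p0 \<theta>))
     = ((real k+2)^2 - \<nu>^2) * integral {0..pi/2} (\<lambda>\<theta>. cos (\<nu> * \<theta>) * p2 \<theta>) - (real k+2)*(real k+1) * integral {0..pi/2} (\<lambda>\<theta>. cos (\<nu> * \<theta>) * p0 \<theta>)"
  proof -
    have i0: "(\<lambda>\<theta>. (real k+2)*(real k+1) * (cos (\<nu> * \<theta>) * p0 \<theta>)) integrable_on {0..pi/2}"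
      by (rule integrable_continuous_interval, rule continuous_on_mult[OF continuous_on_const c0])
    have i2: "(\<lambda>\<theta>. ((real k+2)^2 - \<nu>^2) * (cos (\<nu> * \<theta>) * p2 \<theta>)) integrable_on {0..pi/2}"
      by (rule integrable_continuous_interval, rule continuous_on_mult[OF continuous_on_const c2])
    show ?thesis by (simp only: integral_diff[OF i2 i0] integral_mult_right)
  qed
  moreover have "integral {0..pi/2} (\<lambda>\<theta>. cos (\<nu> * \<theta>) * p2 \<theta>) = JJ \<nu> (k+2)"
    unfolding JJ_def p2_def by (simp add: power_add power2_eq_square mult.assoc mult.commute)
  moreover have "integral {0..pi/2} (\<lambda>\<theta>. cos (\<nu> * \<theta>) * p0 \<theta>) = JJ \<nu> k"
    unfolding JJ_def p0_def ..
  ultimately show ?thesis using z by simp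
qed

definition tr :: "real \<Rightarrow> nat \<Rightarrow> real" where
  "tr \<nu> n = 1 / (pochhammer ((3 - \<nu>) / 2) n * pochhammer ((3 + \<nu>) / 2) n)"

definition KK :: "real \<Rightarrow> real" where "KK \<nu> = cos (\<nu> * pi / 2) / (1 - \<nu>^2)"

lemma tr_0 [simp]: "tr \<nu> 0 = 1" by (simp add: tr_def)

lemma tr_Suc: "tr \<nu> (Suc n) = tr \<nu> n / (((3 - \<nu>) / 2 + real n) * ((3 + \<nu>) / 2 + real n))"
  by (simp add: tr_def pochhammer_Suc field_simps)

lemma tr_pos:
  assumes "\<bar>\<nu>\<bar> < 1"
  shows "tr \<nu> n > 0"
proof -
  have "(3 - \<nu>) / 2 > 0" "(3 + \<nu>) / 2 > 0" using assms by auto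
  then show ?thesis unfolding tr_def by (simp add: pochhammer_pos)
qed

lemma tr_le:
  assumes "\<bar>\<nu>\<bar> < 1"
  shows "tr \<nu> n \<le> 1 / fact n"
proof (induction n)
  case 0 then show ?case by simp
next
  case (Suc n)
  have "\<nu> < 1" "-1 < \<nu>" using assms by (auto simp: abs_less_iff)
  moreover have "real n \<ge> 0" by simp
  ultimately have a1: "(3 - \<nu>) / 2 + real n \<ge> 1" by (simp add: field_simps)
  have a2: "(3 + \<nu>) / 2 + real n \<ge> real n + 1" using \<open>-1 < \<nu>\<close> by (simp add: field_simps)
  note a = a1 a2
  then have "((3 - \<nu>) / 2 + real n) * ((3 + \<nu>) / 2 + real n) \<ge> 1 * (real n + 1)"
    by (intro mult_mono) auto
  then have "tr \<nu> n / (((3 - \<nu>) / 2 + real n) * ((3 + \<nu>) / 2 + real n)) \<le> tr \<nu> n / (real n + 1)"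
    using tr_pos[OF assms, of n] by (intro divide_left_mono) auto
  also have "\<dots> \<le> (1 / fact n) / (real n + 1)"
    using Suc.IH by (intro divide_right_mono) auto
  also have "\<dots> = 1 / fact (Suc n)" by (simp add: field_simps)
  finally show ?case by (simp add: tr_Suc)
qed

lemma aux_div:
  fixes d p f A :: real
  assumes "d \<noteq> 0" "p \<noteq> 0" "f \<noteq> 0"
  shows "(p / d * A) / (p * f) = A / f / d"
  using assms by (simp add: field_simps)

lemma JJ_closed:
  assumes nu: "\<bar>\<nu>\<bar> < 1"
  shows "JJ \<nu> (2*n+1) / fact (2*n+1) = KK \<nu> * tr \<nu> n / 4^n"
proof (induction n)
  case 0
  have "1 - \<nu>^2 \<noteq> 0" using nu by (smt (verit) abs_le_square_iff power2_eq_1_iff)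
  then show ?case using JJ_1[of \<nu>] by (simp add: KK_def field_simps)
next
  case (Suc n)
  have ne: "(real (2*n+1)+2)^2 - \<nu>^2 \<noteq> 0"
  proof -
    have "\<nu>^2 < 1" using nu by (simp add: abs_square_less_1)
    moreover have "(real (2*n+1)+2)^2 \<ge> 1" by (rule one_le_power) simp
    ultimately show ?thesis by linarith
  qed
  define m where "m = 2*n+1"
  have ne': "(real m+2)^2 - \<nu>^2 \<noteq> 0" using ne by (simp add: m_def)
  have r: "((real m+2)^2 - \<nu>^2) * JJ \<nu> (m+2) = (real m+2)*(real m+1) * JJ \<nu> m"
    by (rule JJ_rec)
  have f: "fact (m+2) = ((real m+2)*(real m+1)) * (fact m :: real)"
    by (simp add: numeral_eq_Suc algebra_simps)
  have p0: "(real m+2)*(real m+1) \<noteq> 0" by simp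
  have f0: "(fact m :: real) \<noteq> 0" by simp
  have e4: "4 * (((3 - \<nu>) / 2 + real n) * ((3 + \<nu>) / 2 + real n)) = (real (2*n+1)+2)^2 - \<nu>^2"
    by (simp add: power2_eq_square field_simps)
  have "JJ \<nu> (2*Suc n+1) / fact (2*Suc n+1) = JJ \<nu> (m+2) / fact (m+2)"
    by (simp add: m_def)
  also have "\<dots> = JJ \<nu> m / fact m / ((real m+2)^2 - \<nu>^2)"
  proof -
    have B: "JJ \<nu> (m+2) = ((real m+2)*(real m+1)) / ((real m+2)^2 - \<nu>^2) * JJ \<nu> m"
      using r ne' by (simp add: field_simps)
    show ?thesis unfolding f B using aux_div[OF ne' p0 f0] by simp
  qed
  also have "\<dots> = JJ \<nu> (2*n+1) / fact (2*n+1) / ((real (2*n+1)+2)^2 - \<nu>^2)"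
    by (simp add: m_def)
  also have "\<dots> = KK \<nu> * tr \<nu> n / 4^n / ((real (2*n+1)+2)^2 - \<nu>^2)" using Suc.IH by simp
  also have "\<dots> = KK \<nu> * tr \<nu> (Suc n) / 4^Suc n"
    unfolding tr_Suc e4[symmetric] by (simp add: field_simps)
  finally show ?case .
qed

lemma sin_series:
  fixes z :: complex
  shows "(\<lambda>n. (-1)^n * z^(2*n+1) / of_real (fact (2*n+1))) sums sin z"
proof -
  have sm: "strict_mono (\<lambda>n::nat. 2*n+1)" by (rule strict_monoI) simp
  have z: "\<And>n. n \<notin> range (\<lambda>n::nat. 2*n+1) \<Longrightarrow> sin_coeff n *\<^sub>R z^n = 0"
    by (auto simp: sin_coeff_def elim!: oddE)
  have "(\<lambda>n. sin_coeff ((\<lambda>n. 2*n+1) n) *\<^sub>R z^((\<lambda>n. 2*n+1) n)) sums sin z"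
    using sums_mono_reindex[where g="\<lambda>n. 2*n+1" and f="\<lambda>n. sin_coeff n *\<^sub>R z^n", OF sm z] sin_converges[of z] by blast
  moreover have "sin_coeff (2*n+1) *\<^sub>R z^(2*n+1) = (-1)^n * z^(2*n+1) / of_real (fact (2*n+1))" for n
    by (simp add: sin_coeff_def scaleR_conv_of_real)
  ultimately show ?thesis by simp
qed

lemma summable_odd_exp:
  fixes r :: real
  assumes "r \<ge> 0"
  shows "summable (\<lambda>n. r^(2*n+1) / fact (2*n+1))"
proof -
  have sm: "strict_mono (\<lambda>n::nat. 2*n+1)" by (rule strict_monoI) simp
  define e where "e m = (if odd m then r^m / fact m else 0)" for m
  have "summable e"
  proof (rule summable_comparison_test[OF _ summable_exp[of r]])
    show "\<exists>N. \<forall>n\<ge>N. norm (e n) \<le> inverse (fact n) * r^n"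
      using assms by (auto simp: e_def divide_inverse mult.commute)
  qed
  then have "summable (\<lambda>n. e (2*n+1))"
    by (subst summable_mono_reindex[OF sm]) (auto simp: e_def elim!: oddE)
  then show ?thesis by (simp add: e_def)
qed

lemma Phi_sums:
  "(\<lambda>n. (-1)^n * w^(2*n+1) / of_real (fact (2*n+1)) * of_real (JJ \<nu> (2*n+1))) sums Phi (\<lambda>\<theta>. cos (\<nu> * \<theta>)) w"
proof -
  define c where "c n = (-1)^n * w^(2*n+1) / of_real (fact (2*n+1))" for n
  define f where "f n \<theta> = complex_of_real (cos (\<nu> * \<theta>)) * ((-1)^n * (w * of_real (cos \<theta>))^(2*n+1) / of_real (fact (2*n+1)))" for n \<theta>
  have f_alt: "f n \<theta> = c n * complex_of_real (cos (\<nu> * \<theta>) * cos \<theta> ^ (2*n+1))" for n \<theta>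
    unfolding f_def c_def by (simp add: power_mult_distrib)
  have ul: "uniform_limit {0..pi/2} (\<lambda>n \<theta>. \<Sum>i<n. f i \<theta>) (\<lambda>\<theta>. suminf (\<lambda>i. f i \<theta>)) sequentially"
  proof (rule Weierstrass_m_test)
    fix n \<theta> assume th: "\<theta> \<in> {0..pi/2}"
    have "norm (f n \<theta>) = \<bar>cos (\<nu> * \<theta>)\<bar> * ((norm w * \<bar>cos \<theta>\<bar>) ^ (2*n+1) / fact (2*n+1))"
      unfolding f_def by (simp add: norm_mult norm_divide norm_power del: fact_Suc)
    also have "\<dots> \<le> 1 * (norm w ^ (2*n+1) / fact (2*n+1))"
    proof (intro mult_mono divide_right_mono power_mono)
      show "norm w * \<bar>cos \<theta>\<bar> \<le> norm w" by (simp add: mult_left_le)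
    qed auto
    finally show "norm (f n \<theta>) \<le> norm w ^ (2*n+1) / fact (2*n+1)" by simp
  next
    show "summable (\<lambda>n. norm w ^ (2*n+1) / fact (2*n+1))" by (rule summable_odd_exp) simp
  qed
  have lim_eq: "suminf (\<lambda>i. f i \<theta>) = complex_of_real (cos (\<nu> * \<theta>)) * sin (w * of_real (cos \<theta>))" for \<theta>
    unfolding f_def by (rule sums_unique[symmetric], rule sums_mult, rule sin_series)
  have cont: "continuous_on {0..pi/2} (\<lambda>\<theta>. \<Sum>i<n. f i \<theta>)" for n
    unfolding f_def by (intro continuous_intros) (auto simp del: fact_Suc)
  obtain I J where I: "\<And>n. ((\<lambda>\<theta>. \<Sum>i<n. f i \<theta>) has_integral I n) {0..pi/2}"
    and J: "((\<lambda>\<theta>. suminf (\<lambda>i. f i \<theta>)) has_integral J) {0..pi/2}" and IJ: "I \<longlonglongrightarrow> J"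
    using uniform_limit_integral[OF ul cont] by auto
  have "J = Phi (\<lambda>\<theta>. cos (\<nu> * \<theta>)) w"
    using J unfolding lim_eq Phi_def by (simp add: integral_unique)
  moreover have Ieq: "I n = (\<Sum>i<n. c i * of_real (JJ \<nu> (2*i+1)))" for n
  proof -
    have "((\<lambda>\<theta>. \<Sum>i<n. f i \<theta>) has_integral (\<Sum>i<n. c i * of_real (JJ \<nu> (2*i+1)))) {0..pi/2}"
      unfolding f_alt
    proof (rule has_integral_sum)
      fix i assume "i \<in> {..<n}"
      have "((\<lambda>\<theta>. cos (\<nu> * \<theta>) * cos \<theta> ^ (2*i+1)) has_integral JJ \<nu> (2*i+1)) {0..pi/2}"
        unfolding JJ_def by (rule integrable_integral, rule integrable_continuous_interval) (intro continuous_intros)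
      then show "((\<lambda>\<theta>. c i * complex_of_real (cos (\<nu> * \<theta>) * cos \<theta> ^ (2*i+1))) has_integral (c i * of_real (JJ \<nu> (2*i+1)))) {0..pi/2}"
        by (intro has_integral_mult_right has_integral_of_real)
    qed simp
    then show ?thesis using I[of n] by (metis has_integral_unique)
  qed
  moreover have "(\<lambda>n. \<Sum>i<n. c i * of_real (JJ \<nu> (2*i+1))) = I"
    by (intro ext) (rule Ieq[symmetric])
  ultimately have "(\<lambda>i. c i * of_real (JJ \<nu> (2*i+1))) sums Phi (\<lambda>\<theta>. cos (\<nu> * \<theta>)) w"
    using IJ unfolding sums_def by simp
  then show ?thesis unfolding c_def .
qed

definition FF :: "real \<Rightarrow> complex \<Rightarrow> complex" where
  "FF \<nu> z = hyp1F2 1 (complex_of_real ((3 - \<nu>) / 2)) (complex_of_real ((3 + \<nu>) / 2)) z"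

lemma FF_term:
  "pochhammer (1::complex) n / (pochhammer (complex_of_real ((3 - \<nu>) / 2)) n * pochhammer (complex_of_real ((3 + \<nu>) / 2)) n) * z ^ n / of_nat (fact n)
   = of_real (tr \<nu> n) * z^n"
  unfolding tr_def pochhammer_of_real pochhammer_fact[symmetric]
  by (simp add: field_simps)

lemma FF_sums:
  assumes "\<bar>\<nu>\<bar> < 1"
  shows "(\<lambda>n. of_real (tr \<nu> n) * z^n) sums FF \<nu> z"
proof -
  have "summable (\<lambda>n. of_real (tr \<nu> n) * z^n)"
  proof (rule summable_comparison_test[OF _ summable_exp[of "norm z"]])
    show "\<exists>N. \<forall>n\<ge>N. norm (of_real (tr \<nu> n) * z^n) \<le> inverse (fact n) * norm z ^ n"
    proof (intro exI allI impI)
      fix n :: nat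
      have "norm (of_real (tr \<nu> n) * z^n) = tr \<nu> n * norm z ^ n"
        using tr_pos[OF assms, of n] by (simp add: norm_mult norm_power)
      also have "\<dots> \<le> inverse (fact n) * norm z ^ n"
        using tr_le[OF assms, of n] by (intro mult_right_mono) (auto simp: divide_inverse)
      finally show "norm (of_real (tr \<nu> n) * z^n) \<le> inverse (fact n) * norm z ^ n" .
    qed
  qed
  then show ?thesis unfolding FF_def hyp1F2_def FF_term by (simp add: summable_sums)
qed

lemma Phi_FF:
  assumes nu: "\<bar>\<nu>\<bar> < 1"
  shows "Phi (\<lambda>\<theta>. cos (\<nu> * \<theta>)) w = of_real (KK \<nu>) * w * FF \<nu> (- (w^2) / 4)"
proof -
  have s1: "(\<lambda>n. of_real (KK \<nu>) * w * (of_real (tr \<nu> n) * (- (w^2) / 4)^n)) sums (of_real (KK \<nu>) * w * FF \<nu> (- (w^2) / 4))"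
    by (rule sums_mult, rule FF_sums[OF nu])
  have eq: "(-1)^n * w^(2*n+1) / of_real (fact (2*n+1)) * of_real (JJ \<nu> (2*n+1))
      = of_real (KK \<nu>) * w * (of_real (tr \<nu> n) * (- (w^2) / 4)^n)" for n
  proof -
    have "(-1)^n * w^(2*n+1) / of_real (fact (2*n+1)) * of_real (JJ \<nu> (2*n+1))
        = (-1)^n * w^(2*n+1) * of_real (JJ \<nu> (2*n+1) / fact (2*n+1))"
      by (simp add: field_simps)
    also have "\<dots> = (-1)^n * w^(2*n+1) * of_real (KK \<nu> * tr \<nu> n / 4^n)"
      using JJ_closed[OF nu, of n] by simp
    also have "\<dots> = of_real (KK \<nu>) * w * (of_real (tr \<nu> n) * (- (w^2) / 4)^n)"
      by (simp add: power_minus[of "w^2/4"] power_divide power_mult[symmetric] field_simps power_add)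
    finally show ?thesis .
  qed
  show ?thesis using Phi_sums[of w \<nu>] s1 unfolding eq by (rule sums_unique2)
qed



definition Fr :: "real \<Rightarrow> real \<Rightarrow> real" where "Fr \<nu> r = (\<Sum>n. tr \<nu> n * r^n)"
definition Fr1 :: "real \<Rightarrow> real \<Rightarrow> real" where "Fr1 \<nu> r = (\<Sum>n. diffs (tr \<nu>) n * r^n)"
definition Fr2 :: "real \<Rightarrow> real \<Rightarrow> real" where "Fr2 \<nu> r = (\<Sum>n. diffs (diffs (tr \<nu>)) n * r^n)"

lemma summable_tr:
  assumes "\<bar>\<nu>\<bar> < 1"
  shows "summable (\<lambda>n. tr \<nu> n * y^n)"
proof (rule summable_comparison_test[OF _ summable_exp[of "norm y"]])
  show "\<exists>N. \<forall>n\<ge>N. norm (tr \<nu> n * y^n) \<le> inverse (fact n) * norm y ^ n"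
  proof (intro exI allI impI)
    fix n :: nat
    have "norm (tr \<nu> n * y^n) = tr \<nu> n * norm y ^ n"
      using tr_pos[OF assms, of n] by (simp add: abs_mult power_abs)
    also have "\<dots> \<le> inverse (fact n) * norm y ^ n"
      using tr_le[OF assms, of n] by (intro mult_right_mono) (auto simp: divide_inverse)
    finally show "norm (tr \<nu> n * y^n) \<le> inverse (fact n) * norm y ^ n" .
  qed
qed

lemma summable_tr_c:
  assumes "\<bar>\<nu>\<bar> < 1"
  shows "summable (\<lambda>n. complex_of_real (tr \<nu> n) * z^n)"
  using FF_sums[OF assms] by (rule sums_summable)

lemma summable_d1: "\<bar>\<nu>\<bar> < 1 \<Longrightarrow> summable (\<lambda>n. diffs (tr \<nu>) n * y^n)"
  by (rule termdiff_converges_all) (rule summable_tr)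

lemma summable_d2: "\<bar>\<nu>\<bar> < 1 \<Longrightarrow> summable (\<lambda>n. diffs (diffs (tr \<nu>)) n * y^n)"
  by (rule termdiff_converges_all) (rule summable_d1)

lemma Fr_deriv: "\<bar>\<nu>\<bar> < 1 \<Longrightarrow> DERIV (Fr \<nu>) r :> Fr1 \<nu> r"
  unfolding Fr_def Fr1_def by (rule termdiffs_strong_converges_everywhere) (rule summable_tr)

lemma Fr1_deriv: "\<bar>\<nu>\<bar> < 1 \<Longrightarrow> DERIV (Fr1 \<nu>) r :> Fr2 \<nu> r"
  unfolding Fr1_def Fr2_def by (rule termdiffs_strong_converges_everywhere) (rule summable_d1)

lemma FF_eq: "\<bar>\<nu>\<bar> < 1 \<Longrightarrow> FF \<nu> z = (\<Sum>n. complex_of_real (tr \<nu> n) * z^n)"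
  using FF_sums by (metis sums_unique)

lemma FF_real: "\<bar>\<nu>\<bar> < 1 \<Longrightarrow> FF \<nu> (of_real r) = of_real (Fr \<nu> r)"
proof -
  assume nu: "\<bar>\<nu>\<bar> < 1"
  have "complex_of_real (\<Sum>n. tr \<nu> n * r^n) = (\<Sum>n. complex_of_real (tr \<nu> n * r^n))"
    by (rule suminf_of_real[OF summable_tr[OF nu]])
  then show ?thesis unfolding FF_eq[OF nu] Fr_def by simp
qed

lemma diffs_of_real: "diffs (\<lambda>n. complex_of_real (c n)) = (\<lambda>n. of_real (diffs c n))"
  by (simp add: diffs_def fun_eq_iff)

lemma FF_deriv:
  assumes "\<bar>\<nu>\<bar> < 1"
  shows "(FF \<nu> has_field_derivative (\<Sum>n. diffs (\<lambda>n. complex_of_real (tr \<nu> n)) n * z^n)) (at z)"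
proof -
  have "((\<lambda>z. \<Sum>n. complex_of_real (tr \<nu> n) * z^n) has_field_derivative (\<Sum>n. diffs (\<lambda>n. complex_of_real (tr \<nu> n)) n * z^n)) (at z)"
    by (rule termdiffs_strong_converges_everywhere) (rule summable_tr_c[OF assms])
  moreover have "FF \<nu> = (\<lambda>z. \<Sum>n. complex_of_real (tr \<nu> n) * z^n)" using FF_eq[OF assms] by (rule ext)
  ultimately show ?thesis by simp
qed

lemma FF_deriv_real:
  assumes "\<bar>\<nu>\<bar> < 1"
  shows "deriv (FF \<nu>) (of_real r) = of_real (Fr1 \<nu> r)"
proof -
  have "deriv (FF \<nu>) (of_real r) = (\<Sum>n. diffs (\<lambda>n. complex_of_real (tr \<nu> n)) n * (of_real r)^n)"
    by (rule DERIV_imp_deriv[OF FF_deriv[OF assms]])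
  also have "\<dots> = (\<Sum>n. complex_of_real (diffs (tr \<nu>) n * r^n))" by (simp add: diffs_of_real)
  also have "\<dots> = of_real (Fr1 \<nu> r)"
  proof -
    have "complex_of_real (\<Sum>n. diffs (tr \<nu>) n * r^n) = (\<Sum>n. complex_of_real (diffs (tr \<nu>) n * r^n))"
      by (rule suminf_of_real[OF summable_d1[OF assms]])
    then show ?thesis unfolding Fr1_def by simp
  qed
  finally show ?thesis .
qed

lemma FF_holo: "\<bar>\<nu>\<bar> < 1 \<Longrightarrow> FF \<nu> holomorphic_on S"
  using FF_deriv by (meson field_differentiable_def field_differentiable_at_within holomorphic_on_def)

lemma tr_rec_coeff:
  assumes nu: "\<bar>\<nu>\<bar> < 1"
  shows "((real (Suc m))^2 + real (Suc m) + (1 - \<nu>^2)/4) * tr \<nu> (Suc m) = tr \<nu> m"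
proof -
  have "((real (Suc m))^2 + real (Suc m) + (1 - \<nu>^2)/4) = ((3 - \<nu>) / 2 + real m) * ((3 + \<nu>) / 2 + real m)"
    by (simp add: power2_eq_square field_simps)
  moreover have "((3 - \<nu>) / 2 + real m) * ((3 + \<nu>) / 2 + real m) \<noteq> 0"
  proof -
    have "\<nu> < 1" "-1 < \<nu>" using nu by (auto simp: abs_less_iff)
    then have "(3 - \<nu>) / 2 + real m > 0" "(3 + \<nu>) / 2 + real m > 0" by (simp_all add: field_simps)
    then show ?thesis by simp
  qed
  ultimately show ?thesis unfolding tr_Suc by auto
qed

lemma Fr_ode:
  assumes nu: "\<bar>\<nu>\<bar> < 1"
  shows "r^2 * Fr2 \<nu> r + 2 * r * Fr1 \<nu> r + ((1 - \<nu>^2)/4 - r) * Fr \<nu> r = (1 - \<nu>^2)/4"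
proof -
  define c where "c = tr \<nu>"
  define ab where "ab = (1 - \<nu>^2)/4"
  define u where "u m = real m * (real m - 1) * c m * r^m" for m
  define v where "v m = real m * c m * r^m" for m
  define y where "y m = (if m = 0 then 0 else c (m - 1) * r^m)" for m
  have sA: "u sums (r^2 * Fr2 \<nu> r)"
  proof -
    have "(\<lambda>n. r^2 * (diffs (diffs c) n * r^n)) sums (r^2 * Fr2 \<nu> r)"
      unfolding Fr2_def c_def by (rule sums_mult, rule summable_sums, rule summable_d2[OF nu])
    moreover have "r^2 * (diffs (diffs c) n * r^n) = u (n+2)" for n
      unfolding u_def diffs_def by (simp add: algebra_simps power_add power2_eq_square)
    ultimately have "(\<lambda>n. u (n+2)) sums (r^2 * Fr2 \<nu> r)" by simp
    then show ?thesis by (subst (asm) sums_zero_iff_shift) (auto simp: u_def less_2_cases_iff)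
  qed
  have sB: "v sums (r * Fr1 \<nu> r)"
  proof -
    have "(\<lambda>n. r * (diffs c n * r^n)) sums (r * Fr1 \<nu> r)"
      unfolding Fr1_def c_def by (rule sums_mult, rule summable_sums, rule summable_d1[OF nu])
    moreover have "r * (diffs c n * r^n) = v (n+1)" for n
      unfolding v_def diffs_def by (simp add: algebra_simps)
    ultimately have "(\<lambda>n. v (n+1)) sums (r * Fr1 \<nu> r)" by simp
    then show ?thesis by (subst (asm) sums_zero_iff_shift) (auto simp: v_def)
  qed
  have sC: "y sums (r * Fr \<nu> r)"
  proof -
    have "(\<lambda>n. r * (c n * r^n)) sums (r * Fr \<nu> r)"
      unfolding Fr_def c_def by (rule sums_mult, rule summable_sums, rule summable_tr[OF nu])
    moreover have "r * (c n * r^n) = y (n+1)" for n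
      unfolding y_def by (simp add: algebra_simps)
    ultimately have "(\<lambda>n. y (n+1)) sums (r * Fr \<nu> r)" by simp
    then show ?thesis by (subst (asm) sums_zero_iff_shift) (auto simp: y_def)
  qed
  have sD: "(\<lambda>m. ab * (c m * r^m)) sums (ab * Fr \<nu> r)"
    unfolding Fr_def c_def by (rule sums_mult, rule summable_sums, rule summable_tr[OF nu])
  have sAll: "(\<lambda>m. u m + 2 * v m + ab * (c m * r^m) - y m) sums
       (r^2 * Fr2 \<nu> r + 2 * (r * Fr1 \<nu> r) + ab * Fr \<nu> r - r * Fr \<nu> r)"
    by (intro sums_add sums_diff sums_mult sA sB sC sD)
  have coef: "u m + 2 * v m + ab * (c m * r^m) - y m = (if m = 0 then ab else 0)" for m
  proof (cases m)
    case 0 then show ?thesis by (simp add: u_def v_def y_def c_def)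
  next
    case (Suc k)
    have "u m + 2 * v m + ab * (c m * r^m) - y m = (((real (Suc k))^2 + real (Suc k) + ab) * c (Suc k) - c k) * r^m"
      unfolding u_def v_def y_def Suc by (simp add: algebra_simps power2_eq_square)
    also have "\<dots> = 0" using tr_rec_coeff[OF nu, of k] unfolding c_def ab_def by simp
    finally show ?thesis using Suc by simp
  qed
  have "(\<lambda>m. if m = 0 then ab else 0) sums ab"
    using sums_single[of 0 "\<lambda>_. ab"] by simp
  with sAll have "r^2 * Fr2 \<nu> r + 2 * (r * Fr1 \<nu> r) + ab * Fr \<nu> r - r * Fr \<nu> r = ab"
    unfolding coef by (metis sums_unique2)
  then show ?thesis unfolding ab_def by (simp add: algebra_simps)
qed

lemma Fr_local_nonneg:
  assumes nu: "\<bar>\<nu>\<bar> < 1" and r0: "r0 \<noteq> 0" and z: "Fr \<nu> r0 = 0" "Fr1 \<nu> r0 = 0"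
  shows "\<exists>d>0. \<forall>r. \<bar>r - r0\<bar> < d \<longrightarrow> Fr \<nu> r \<ge> 0"
proof -
  have ab: "(1 - \<nu>^2)/4 > 0" using nu by (simp add: abs_square_less_1)
  have "r0^2 * Fr2 \<nu> r0 = (1 - \<nu>^2)/4" using Fr_ode[OF nu, of r0] z by simp
  then have p2: "Fr2 \<nu> r0 > 0" using ab r0
    by (metis zero_less_mult_pos zero_less_power2)
  obtain d1 where d1: "d1 > 0" "\<And>h. h > 0 \<Longrightarrow> h < d1 \<Longrightarrow> Fr1 \<nu> r0 < Fr1 \<nu> (r0 + h)"
    using DERIV_pos_inc_right[OF Fr1_deriv[OF nu] p2] by blast
  obtain d2 where d2: "d2 > 0" "\<And>h. h > 0 \<Longrightarrow> h < d2 \<Longrightarrow> Fr1 \<nu> (r0 - h) < Fr1 \<nu> r0"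
    using DERIV_pos_inc_left[OF Fr1_deriv[OF nu] p2] by blast
  define d where "d = min d1 d2"
  have "Fr \<nu> r \<ge> 0" if r: "\<bar>r - r0\<bar> < d" for r
  proof (cases rule: linorder_cases[of r0 r])
    case less
    obtain \<xi> where xi: "r0 < \<xi>" "\<xi> < r" "Fr \<nu> r - Fr \<nu> r0 = (r - r0) * Fr1 \<nu> \<xi>"
      using MVT2[OF less Fr_deriv[OF nu]] by blast
    have "Fr1 \<nu> \<xi> > 0" using d1(2)[of "\<xi> - r0"] xi r z unfolding d_def by auto
    then show ?thesis using xi less z by simp
  next
    case equal then show ?thesis using z by simp
  next
    case greater
    obtain \<xi> where xi: "r < \<xi>" "\<xi> < r0" "Fr \<nu> r0 - Fr \<nu> r = (r0 - r) * Fr1 \<nu> \<xi>"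
      using MVT2[OF greater Fr_deriv[OF nu]] by blast
    have "Fr1 \<nu> \<xi> < 0" using d2(2)[of "r0 - \<xi>"] xi r z unfolding d_def by auto
    then have "(r0 - r) * Fr1 \<nu> \<xi> < 0" using greater by (simp add: mult_pos_neg)
    then show ?thesis using xi z by simp
  qed
  moreover have "d > 0" using d1 d2 by (simp add: d_def)
  ultimately show ?thesis by blast
qed



lemma cos_nu_mono:
  assumes "0 \<le> a" "a \<le> b" "b \<le> pi/2" "\<bar>\<nu>\<bar> < 1"
  shows "cos (\<nu> * b) \<le> cos (\<nu> * a)"
proof -
  have e: "cos (\<nu> * t) = cos (\<bar>\<nu>\<bar> * t)" if "t \<ge> 0" for t
    using that by (metis abs_mult abs_of_nonneg cos_abs_real)
  have "\<bar>\<nu>\<bar> * b \<le> 1 * b" using assms by (intro mult_right_mono) auto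
  then have "\<bar>\<nu>\<bar> * b \<le> pi" using assms pi_gt3 by linarith
  moreover have "\<bar>\<nu>\<bar> * a \<le> \<bar>\<nu>\<bar> * b" using assms by (intro mult_left_mono) auto
  ultimately have "cos (\<bar>\<nu>\<bar> * b) \<le> cos (\<bar>\<nu>\<bar> * a)" using assms
    by (intro cos_monotone_0_pi_le) auto
  then show ?thesis using e assms by simp
qed

lemma cos_nu_pos:
  assumes "\<bar>\<nu>\<bar> < 1"
  shows "cos (\<nu> * pi / 2) > 0"
proof -
  have n: "\<nu> < 1" "-1 < \<nu>" using assms by (auto simp: abs_less_iff)
  have "\<nu> * (pi/2) < 1 * (pi/2)" using n by (intro mult_strict_right_mono) auto
  moreover have "(-1) * (pi/2) < \<nu> * (pi/2)" using n by (intro mult_strict_right_mono) auto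
  ultimately have "- (pi/2) < \<nu> * (pi/2)" "\<nu> * (pi/2) < pi/2" by simp_all
  then have "cos (\<nu> * (pi/2)) > 0" by (rule cos_gt_zero_pi)
  then show ?thesis by simp
qed

lemma adm_cos:
  assumes nu: "\<bar>\<nu>\<bar> < 1"
  shows "adm (\<lambda>\<theta>. cos (\<nu> * \<theta>))"
  unfolding adm_def
proof (intro conjI allI impI)
  show "continuous_on {0..pi/2} (\<lambda>\<theta>. cos (\<nu> * \<theta>))" by (intro continuous_intros)
  show "0 \<le> cos (\<nu> * 0)" by simp
  show "0 < cos (\<nu> * (pi/2))" using cos_nu_pos[OF nu] by simp
  fix a b :: real assume ab: "0 < a" "a \<le> b" "b \<le> pi/2"
  have sa: "0 < sin a" using ab by (intro sin_gt_zero) auto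
  have sab: "sin a \<le> sin b" using ab by (intro sin_monotone_2pi_le) auto
  have cb: "cos (\<nu> * b) > 0"
    using cos_nu_mono[of b "pi/2" \<nu>] ab nu cos_nu_pos[OF nu] by simp
  have cab: "cos (\<nu> * b) \<le> cos (\<nu> * a)" using cos_nu_mono[of a b \<nu>] ab nu by simp
  have "cos (\<nu> * b) / sin b \<le> cos (\<nu> * b) / sin a"
    using cb sa sab by (intro divide_left_mono) auto
  also have "\<dots> \<le> cos (\<nu> * a) / sin a" using cab sa by (intro divide_right_mono) auto
  finally show "cos (\<nu> * b) / sin b \<le> cos (\<nu> * a) / sin a" .
qed

lemma adm_plus_sin:
  assumes "adm \<omega>" "lam \<ge> 0"
  shows "adm (\<lambda>\<theta>. \<omega> \<theta> + lam * sin \<theta>)"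
  using assms unfolding adm_def
proof (intro conjI allI impI)
  assume a: "continuous_on {0..pi / 2} \<omega> \<and> 0 \<le> \<omega> 0 \<and> 0 < \<omega> (pi / 2) \<and>
    (\<forall>a b. 0 < a \<longrightarrow> a \<le> b \<longrightarrow> b \<le> pi / 2 \<longrightarrow> \<omega> b / sin b \<le> \<omega> a / sin a)"
  show "continuous_on {0..pi/2} (\<lambda>\<theta>. \<omega> \<theta> + lam * sin \<theta>)" using a by (intro continuous_intros) auto
  show "0 \<le> \<omega> 0 + lam * sin 0" using a by simp
  show "0 < \<omega> (pi/2) + lam * sin (pi/2)" using a assms(2) by simp
  fix x y :: real assume xy: "0 < x" "x \<le> y" "y \<le> pi/2"
  have sx: "sin x > 0" "sin y > 0" using xy by (auto intro!: sin_gt_zero)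
  have "(\<omega> y + lam * sin y) / sin y = \<omega> y / sin y + lam" using sx by (simp add: field_simps)
  also have "\<dots> \<le> \<omega> x / sin x + lam" using a xy by auto
  also have "\<dots> = (\<omega> x + lam * sin x) / sin x" using sx by (simp add: field_simps)
  finally show "(\<omega> y + lam * sin y) / sin y \<le> (\<omega> x + lam * sin x) / sin x" .
qed

lemma adm_minus:
  assumes nu: "\<bar>\<nu>\<bar> < 1" and l: "0 \<le> lam" "lam \<le> cos (\<nu> * pi / 2) / 2"
  shows "adm (\<lambda>\<theta>. cos (\<nu> * \<theta>) + lam * (- (cos \<theta>^2 * sin \<theta>)))"
  unfolding adm_def
proof (intro conjI allI impI)
  show "continuous_on {0..pi/2} (\<lambda>\<theta>. cos (\<nu> * \<theta>) + lam * (- (cos \<theta>^2 * sin \<theta>)))" by (intro continuous_intros)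
  show "0 \<le> cos (\<nu> * 0) + lam * (- (cos 0^2 * sin 0))" by simp
  show "0 < cos (\<nu> * (pi/2)) + lam * (- (cos (pi/2)^2 * sin (pi/2)))" using cos_nu_pos[OF nu] by simp
  fix a b :: real assume ab: "0 < a" "a \<le> b" "b \<le> pi/2"
  define sa where "sa = sin a"
  define sb where "sb = sin b"
  have sa: "0 < sa" unfolding sa_def using ab by (intro sin_gt_zero) auto
  have sab: "sa \<le> sb" unfolding sa_def sb_def using ab by (intro sin_monotone_2pi_le) auto
  have sb1: "sb \<le> 1" unfolding sb_def by simp
  define C where "C = cos (\<nu> * pi / 2)"
  have cb: "cos (\<nu> * b) \<ge> C"
    using cos_nu_mono[of b "pi/2" \<nu>] ab nu unfolding C_def by simp
  have cab: "cos (\<nu> * b) \<le> cos (\<nu> * a)" using cos_nu_mono[of a b \<nu>] ab nu by simp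
  have C0: "C > 0" using cos_nu_pos[OF nu] unfolding C_def .
  have key1: "cos (\<nu> * a) / sa - cos (\<nu> * b) / sb \<ge> C * (sb - sa)"
  proof -
    have "cos (\<nu> * a) / sa - cos (\<nu> * b) / sb \<ge> cos (\<nu> * b) / sa - cos (\<nu> * b) / sb"
      using cab sa by (simp add: divide_right_mono)
    also have "cos (\<nu> * b) / sa - cos (\<nu> * b) / sb = cos (\<nu> * b) * (sb - sa) / (sa * sb)"
      using sa sab by (simp add: field_simps)
    also have "\<dots> \<ge> cos (\<nu> * b) * (sb - sa)"
    proof -
      have "sa * sb \<le> 1" using sa sab sb1 by (smt (verit) mult_le_one)
      moreover have "cos (\<nu> * b) * (sb - sa) \<ge> 0" using cb C0 sab by simp
      moreover have "sa * sb > 0" using sa sab by simp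
      ultimately show ?thesis by (simp add: le_divide_eq mult_left_le)
    qed
    also have "cos (\<nu> * b) * (sb - sa) \<ge> C * (sb - sa)" using cb sab by (intro mult_right_mono) auto
    finally show ?thesis .
  qed
  have key2: "lam * (cos a^2 - cos b^2) \<le> C * (sb - sa)"
  proof -
    have "cos a^2 - cos b^2 = (sb - sa) * (sb + sa)"
      unfolding sa_def sb_def by (simp add: cos_squared_eq algebra_simps power2_eq_square)
    also have "\<dots> \<le> (sb - sa) * 2" using sab sb1 by (intro mult_left_mono) auto
    finally have "lam * (cos a^2 - cos b^2) \<le> lam * ((sb - sa) * 2)" using l by (intro mult_left_mono) auto
    also have "\<dots> \<le> C / 2 * ((sb - sa) * 2)" using l sab unfolding C_def by (intro mult_right_mono) auto
    also have "C / 2 * ((sb - sa) * 2) = C * (sb - sa)" by simp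
    finally show ?thesis .
  qed
  have "(cos (\<nu> * b) + lam * (- (cos b^2 * sin b))) / sin b = cos (\<nu> * b) / sb - lam * cos b^2"
    using sa sab unfolding sb_def by (simp add: field_simps)
  also have "\<dots> \<le> cos (\<nu> * a) / sa - lam * cos a^2" using key1 key2 by (simp add: algebra_simps)
  also have "\<dots> = (cos (\<nu> * a) + lam * (- (cos a^2 * sin a))) / sin a"
    using sa unfolding sa_def by (simp add: field_simps)
  finally show "(cos (\<nu> * b) + lam * (- (cos b^2 * sin b))) / sin b \<le> (cos (\<nu> * a) + lam * (- (cos a^2 * sin a))) / sin a" .
qed

lemma Phi_add:
  assumes "continuous_on {0..pi/2} \<omega>" "continuous_on {0..pi/2} h"
  shows "Phi (\<lambda>\<theta>. \<omega> \<theta> + c * h \<theta>) w = Phi \<omega> w + of_real c * Phi h w"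
proof -
  have i1: "(\<lambda>\<theta>. complex_of_real (\<omega> \<theta>) * sin (w * complex_of_real (cos \<theta>))) integrable_on {0..pi/2}"
    by (rule integrable_continuous_interval) (intro continuous_intros assms)
  have i2: "(\<lambda>\<theta>. of_real c * (complex_of_real (h \<theta>) * sin (w * complex_of_real (cos \<theta>)))) integrable_on {0..pi/2}"
    by (rule integrable_continuous_interval) (intro continuous_intros assms)
  have "Phi (\<lambda>\<theta>. \<omega> \<theta> + c * h \<theta>) w = integral {0..pi/2} (\<lambda>\<theta>. complex_of_real (\<omega> \<theta>) * sin (w * complex_of_real (cos \<theta>)) + of_real c * (complex_of_real (h \<theta>) * sin (w * complex_of_real (cos \<theta>))))"
    unfolding Phi_def by (simp add: algebra_simps)
  also have "\<dots> = Phi \<omega> w + of_real c * Phi h w"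
    unfolding Phi_def by (simp add: integral_add[OF i1 i2])
  finally show ?thesis .
qed

lemma Psi2:
  assumes "x \<noteq> 0" "cos x = 1"
  shows "integral {0..pi/2} (\<lambda>\<theta>. - (cos \<theta>^2 * sin \<theta>) * sin (x * cos \<theta>)) = 1 / x"
proof -
  define a1 where "a1 = - 1 / x"
  define a2 where "a2 = 2 / x^2"
  define a3 where "a3 = 2 / x^3"
  have f1: "a1 * x = -1" "a2 * x = - 2 * a1" "a3 * x = a2" using assms(1)
    unfolding a1_def a2_def a3_def by (simp_all add: field_simps power2_eq_square power3_eq_cube)
  define P :: "real \<Rightarrow> real" where "P s = a1 * (s^2 * cos (x * s)) + a2 * (s * sin (x * s)) + a3 * cos (x * s)" for s
  have sx: "sin x = 0" using assms(2) sin_cos_squared_add[of x] by simp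
  have "integral {0..pi/2} (\<lambda>\<theta>. - (cos \<theta>^2 * sin \<theta>) * sin (x * cos \<theta>)) = P (cos (pi/2)) - P (cos 0)"
  proof (rule FTC_real)
    fix \<theta> :: real
    have dP: "DERIV P s :> s^2 * sin (x * s)" for s
    proof -
      have "DERIV P s :> a1 * (2 * s * cos (x * s) - s^2 * (sin (x * s) * x)) + a2 * (sin (x * s) + s * (cos (x * s) * x)) + a3 * (- sin (x * s) * x)"
        unfolding P_def by (auto intro!: derivative_eq_intros simp: algebra_simps power2_eq_square)
      moreover have "a1 * (2 * s * cos (x * s) - s^2 * (sin (x * s) * x)) + a2 * (sin (x * s) + s * (cos (x * s) * x)) + a3 * (- sin (x * s) * x) = s^2 * sin (x * s)"
      proof -
        have "a1 * (2 * s * cos (x * s) - s^2 * (sin (x * s) * x)) + a2 * (sin (x * s) + s * (cos (x * s) * x)) + a3 * (- sin (x * s) * x)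
           = s * cos (x * s) * (2 * a1 + a2 * x) - s^2 * sin (x * s) * (a1 * x) + sin (x * s) * (a2 - a3 * x)"
          by (simp add: algebra_simps)
        then show ?thesis using f1 by simp
      qed
      ultimately show ?thesis by simp
    qed
    have "DERIV (\<lambda>\<theta>. P (cos \<theta>)) \<theta> :> (cos \<theta>)^2 * sin (x * cos \<theta>) * (- sin \<theta>)"
      using DERIV_chain2[OF dP DERIV_cos] .
    then show "DERIV (\<lambda>\<theta>. P (cos \<theta>)) \<theta> :> - (cos \<theta>^2 * sin \<theta>) * sin (x * cos \<theta>)"
      by (simp add: algebra_simps)
  qed simp
  also have "\<dots> = - a1 - a3 + a3" unfolding P_def using assms sx by simp
  also have "\<dots> = 1 / x" unfolding a1_def by simp
  finally show ?thesis .
qed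



lemma hurwitz_perturb:
  fixes g \<Psi> :: "complex \<Rightarrow> complex" and x0 r lam0 :: real
  assumes hg: "g holomorphic_on UNIV" and hp: "\<Psi> holomorphic_on UNIV"
    and g0: "g (of_real x0) = 0" and r: "r > 0" and l0: "lam0 > 0"
    and gnn: "\<And>x. \<bar>x - x0\<bar> < r \<Longrightarrow> Re (g (of_real x)) \<ge> 0"
    and ppos: "\<And>x. \<bar>x - x0\<bar> < r \<Longrightarrow> Re (\<Psi> (of_real x)) > 0"
    and real0: "\<And>lam z. 0 < lam \<Longrightarrow> lam \<le> lam0 \<Longrightarrow> g z + of_real lam * \<Psi> z = 0 \<Longrightarrow> Im z = 0"
    and nc: "\<not> g constant_on ball (of_real x0) r"
  shows False
proof -
  define S where "S = ball (complex_of_real x0) r"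
  define lam where "lam n = lam0 / real (Suc n)" for n
  have lam: "0 < lam n" "lam n \<le> lam0" for n
    unfolding lam_def using l0 by (auto simp: divide_le_eq)
  have "g (of_real x0) \<noteq> 0"
  proof (rule Hurwitz_no_zeros[where \<F>="\<lambda>n z. g z + of_real (lam n) * \<Psi> z" and S=S and g=g])
    show "open S" "connected S" unfolding S_def by auto
    show "(\<lambda>z. g z + of_real (lam n) * \<Psi> z) holomorphic_on S" for n
      using hg hp by (intro holomorphic_intros) (auto intro: holomorphic_on_subset)
    show "g holomorphic_on S" using hg by (rule holomorphic_on_subset) simp
    show "\<not> g constant_on S" using nc unfolding S_def .
    show "complex_of_real x0 \<in> S" using r unfolding S_def by simp
    show "uniform_limit K (\<lambda>n z. g z + of_real (lam n) * \<Psi> z) g sequentially" if K: "compact K" "K \<subseteq> S" for K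
    proof -
      have "continuous_on K \<Psi>" using hp holomorphic_on_imp_continuous_on holomorphic_on_subset by blast
      then have "compact (\<Psi> ` K)" using K by (intro compact_continuous_image)
      then obtain B where B: "\<And>z. z \<in> K \<Longrightarrow> norm (\<Psi> z) \<le> B"
        using compact_imp_bounded bounded_iff by (metis image_eqI)
      define B' where "B' = max B 0"
      have lim: "(\<lambda>n. lam0 * B' / real (Suc n)) \<longlonglongrightarrow> 0"
        using LIMSEQ_Suc[OF lim_const_over_n[of "lam0 * B'"]] by simp
      show ?thesis
      proof (rule uniform_limitI)
        fix e :: real assume e: "e > 0"
        show "\<forall>\<^sub>F n in sequentially. \<forall>z\<in>K. dist (g z + of_real (lam n) * \<Psi> z) (g z) < e"
        proof (rule eventually_mono[OF order_tendstoD(2)[OF lim e]], intro ballI)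
          fix n z assume n: "lam0 * B' / real (Suc n) < e" and z: "z \<in> K"
          have "dist (g z + of_real (lam n) * \<Psi> z) (g z) = lam n * norm (\<Psi> z)"
            using lam(1)[of n] by (simp add: dist_norm norm_mult)
          also have "\<dots> \<le> lam n * B'" using B[OF z] lam(1)[of n] unfolding B'_def
            by (intro mult_left_mono) auto
          also have "\<dots> = lam0 * B' / real (Suc n)" unfolding lam_def by simp
          finally show "dist (g z + of_real (lam n) * \<Psi> z) (g z) < e" using n by simp
        qed
      qed
    qed
    fix n z assume z: "z \<in> S"
    show "g z + of_real (lam n) * \<Psi> z \<noteq> 0"
    proof
      assume h: "g z + of_real (lam n) * \<Psi> z = 0"
      have "Im z = 0" using real0[OF lam(1) lam(2) h] .
      then have zr: "z = of_real (Re z)" by (simp add: complex_eq_iff)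
      have "\<bar>Re z - x0\<bar> < r"
        using z zr unfolding S_def by (metis dist_commute dist_of_real dist_real_def mem_ball)
      then have "Re (g (of_real (Re z))) \<ge> 0" "Re (\<Psi> (of_real (Re z))) > 0"
        using gnn ppos by auto
      moreover have "Re (g z + of_real (lam n) * \<Psi> z) = Re (g (of_real (Re z))) + lam n * Re (\<Psi> (of_real (Re z)))"
      proof -
        have "Re (g z + of_real (lam n) * \<Psi> z) = Re (g z) + lam n * Re (\<Psi> z)" by simp
        moreover have "g z = g (of_real (Re z))" "\<Psi> z = \<Psi> (of_real (Re z))" using zr by metis+
        ultimately show ?thesis by simp
      qed
      ultimately have "Re (g z + of_real (lam n) * \<Psi> z) > 0"
        using lam(1)[of n] by (simp add: add_nonneg_pos)
      then show False using h by simp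
    qed
  qed
  then show False using g0 by simp
qed

lemma pos_near:
  fixes f :: "real \<Rightarrow> real"
  assumes "isCont f x" "f x > 0"
  shows "\<exists>\<delta>>0. \<forall>y. \<bar>y - x\<bar> < \<delta> \<longrightarrow> f y > 0"
proof -
  have "\<forall>\<^sub>F y in at x. f y > 0" using order_tendstoD(1)[OF assms(1)[unfolded isCont_def] assms(2)] .
  then obtain d where d: "d > 0" "\<And>y. y \<noteq> x \<Longrightarrow> dist y x < d \<Longrightarrow> f y > 0"
    unfolding eventually_at by auto
  have "\<forall>y. \<bar>y - x\<bar> < d \<longrightarrow> f y > 0"
  proof (intro allI impI)
    fix y assume "\<bar>y - x\<bar> < d"
    then show "f y > 0" using d assms(2) by (cases "y = x") (auto simp: dist_real_def)
  qed
  then show ?thesis using d(1) by blast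
qed

lemma isCont_Re_of_real:
  assumes "\<Psi> holomorphic_on UNIV"
  shows "isCont (\<lambda>y. Re (\<Psi> (of_real y))) x"
proof -
  have "continuous_on UNIV \<Psi>" using assms holomorphic_on_imp_continuous_on by blast
  then have "isCont \<Psi> (of_real x)" by (simp add: continuous_on_eq_continuous_at)
  moreover have "isCont (\<lambda>y. complex_of_real y) x" by (intro continuous_intros)
  ultimately have "isCont (\<lambda>y. \<Psi> (complex_of_real y)) x" using isCont_o2 by blast
  then show ?thesis by (rule isCont_Re)
qed

lemma FF_0: "\<bar>\<nu>\<bar> < 1 \<Longrightarrow> FF \<nu> 0 = 1"
  using FF_eq[of \<nu> 0] by simp

lemma g_real:
  assumes nu: "\<bar>\<nu>\<bar> < 1"
  shows "Phi (\<lambda>\<theta>. cos (\<nu> * \<theta>)) (of_real y) = of_real (KK \<nu> * y * Fr \<nu> (- (y^2) / 4))"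
proof -
  have "- ((complex_of_real y)^2) / 4 = of_real (- (y^2) / 4)" by simp
  then show ?thesis using Phi_FF[OF nu, of "of_real y"] FF_real[OF nu, of "- (y^2) / 4"] by simp
qed

lemma KK_pos: "\<bar>\<nu>\<bar> < 1 \<Longrightarrow> KK \<nu> > 0"
  unfolding KK_def using cos_nu_pos[of \<nu>] by (simp add: abs_square_less_1)

lemma no_double_zero:
  assumes nu: "\<bar>\<nu>\<bar> < 1" and x: "x > 0"
    and z0: "Fr \<nu> (- (x^2) / 4) = 0" and z1: "Fr1 \<nu> (- (x^2) / 4) = 0"
  shows False
proof -
  define r0 where "r0 = - (x^2) / 4"
  define \<omega>0 where "\<omega>0 = (\<lambda>\<theta>::real. cos (\<nu> * \<theta>))"
  define g where "g = Phi \<omega>0"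
  have adm0: "adm \<omega>0" unfolding \<omega>0_def by (rule adm_cos[OF nu])
  have hg: "g holomorphic_on UNIV" unfolding g_def by (rule Phi_holo[OF adm0])
  have r00: "r0 \<noteq> 0" using x unfolding r0_def by simp
  obtain d where d: "d > 0" "\<And>r. \<bar>r - r0\<bar> < d \<Longrightarrow> Fr \<nu> r \<ge> 0"
    using Fr_local_nonneg[OF nu r00] z0 z1 unfolding r0_def by blast
  define \<rho> where "\<rho> = min x (d / (3 * x))"
  have \<rho>0: "\<rho> > 0" unfolding \<rho>_def using x d by simp
  have gnn: "Re (g (of_real y)) \<ge> 0" if y: "\<bar>y - x\<bar> < \<rho>" for y
  proof -
    have y0: "y > 0" using y unfolding \<rho>_def by auto
    have "\<bar>y + x\<bar> \<le> 3 * x" using y x unfolding \<rho>_def by auto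
    then have "\<bar>y - x\<bar> * \<bar>y + x\<bar> \<le> \<bar>y - x\<bar> * (3 * x)" by (intro mult_left_mono) auto
    also have "\<dots> < d / (3 * x) * (3 * x)" using y x unfolding \<rho>_def by (intro mult_strict_right_mono) auto
    also have "\<dots> = d" using x by simp
    finally have "\<bar>y^2 - x^2\<bar> < d" by (simp add: power2_eq_square algebra_simps abs_mult[symmetric])
    then have "\<bar>- (y^2) / 4 - r0\<bar> < d" unfolding r0_def by simp
    then have "Fr \<nu> (- (y^2) / 4) \<ge> 0" by (rule d(2))
    then show ?thesis unfolding g_def \<omega>0_def g_real[OF nu] using KK_pos[OF nu] y0 by simp
  qed
  have gx0: "g (of_real x) = 0" unfolding g_def \<omega>0_def g_real[OF nu] using z0 by simp
  have nc: "\<not> g constant_on ball (of_real x) r" if r: "r > 0" for r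
  proof
    assume "g constant_on ball (of_real x) r"
    then obtain c where c: "\<And>u. u \<in> ball (of_real x) r \<Longrightarrow> g u = c" unfolding constant_on_def by blast
    have "c = 0" using c[of "of_real x"] gx0 r by simp
    have "g (of_real (pi/2)) = (\<lambda>_. 0) (of_real (pi/2))"
      using analytic_continuation_open[where s="ball (of_real x) r" and s'=UNIV and f=g and g="\<lambda>_. 0"]
        hg r c \<open>c = 0\<close> by auto
    moreover have "Re (g (of_real (pi/2))) > 0" unfolding g_def by (rule Phi_pos[OF adm0]) auto
    ultimately show False by simp
  qed
  show False
  proof (cases "cos x = 1")
    case False
    define \<Psi> where "\<Psi> = Phi (\<lambda>\<theta>. sin \<theta>)"
    have contw: "continuous_on {0..pi/2} \<omega>0" using adm0 by (simp add: adm_def)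
    have conth: "continuous_on {0..pi/2} (\<lambda>\<theta>::real. sin \<theta>)" by (intro continuous_intros)
    have fam: "Phi (\<lambda>\<theta>. \<omega>0 \<theta> + lam * sin \<theta>) w = g w + of_real lam * \<Psi> w" for lam w
      unfolding g_def \<Psi>_def by (rule Phi_add[OF contw conth])
    have hp: "\<Psi> holomorphic_on UNIV"
    proof -
      have "Phi (\<lambda>\<theta>. \<omega>0 \<theta> + 1 * sin \<theta>) holomorphic_on UNIV" by (rule Phi_holo[OF adm_plus_sin[OF adm0]]) simp
      moreover have "\<Psi> = (\<lambda>w. Phi (\<lambda>\<theta>. \<omega>0 \<theta> + 1 * sin \<theta>) w - g w)" using fam[of 1] by (auto simp: fun_eq_iff)
      ultimately show ?thesis using hg by (metis holomorphic_on_diff)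
    qed
    have "\<Psi> (of_real x) = of_real ((1 - cos x) / x)"
      unfolding \<Psi>_def Phi_real[OF conth] using Psi1[of x] x by simp
    moreover have "(1 - cos x) / x > 0" using False x cos_le_one[of x] by (simp add: less_le)
    ultimately have "Re (\<Psi> (of_real x)) > 0" by simp
    then obtain \<delta> where \<delta>: "\<delta> > 0" "\<And>y. \<bar>y - x\<bar> < \<delta> \<Longrightarrow> Re (\<Psi> (of_real y)) > 0"
      using pos_near[OF isCont_Re_of_real[OF hp]] by blast
    show False
    proof (rule hurwitz_perturb[OF hg hp gx0 _ zero_less_one])
      show "min \<rho> \<delta> > 0" using \<rho>0 \<delta> by simp
      show "Re (g (of_real y)) \<ge> 0" if "\<bar>y - x\<bar> < min \<rho> \<delta>" for y using gnn that by simp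
      show "Re (\<Psi> (of_real y)) > 0" if "\<bar>y - x\<bar> < min \<rho> \<delta>" for y using \<delta> that by simp
      show "Im z = 0" if "0 < lam" "lam \<le> 1" "g z + of_real lam * \<Psi> z = 0" for lam z
        using Phi_real_zeros[OF adm_plus_sin[OF adm0, of lam]] fam[of lam z] that by simp
      show "\<not> g constant_on ball (of_real x) (min \<rho> \<delta>)" using nc \<rho>0 \<delta> by simp
    qed
  next
    case True
    define h where "h = (\<lambda>\<theta>::real. - (cos \<theta>^2 * sin \<theta>))"
    define \<Psi> where "\<Psi> = Phi h"
    define lam0 where "lam0 = cos (\<nu> * pi / 2) / 2"
    have l0: "lam0 > 0" unfolding lam0_def using cos_nu_pos[OF nu] by simp
    have contw: "continuous_on {0..pi/2} \<omega>0" using adm0 by (simp add: adm_def)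
    have conth: "continuous_on {0..pi/2} h" unfolding h_def by (intro continuous_intros)
    have fam: "Phi (\<lambda>\<theta>. \<omega>0 \<theta> + lam * h \<theta>) w = g w + of_real lam * \<Psi> w" for lam w
      unfolding g_def \<Psi>_def by (rule Phi_add[OF contw conth])
    have admf: "adm (\<lambda>\<theta>. \<omega>0 \<theta> + lam * h \<theta>)" if "0 \<le> lam" "lam \<le> lam0" for lam
      unfolding \<omega>0_def h_def using adm_minus[OF nu that(1)] that(2) unfolding lam0_def by simp
    have hp: "\<Psi> holomorphic_on UNIV"
    proof -
      have "Phi (\<lambda>\<theta>. \<omega>0 \<theta> + lam0 * h \<theta>) holomorphic_on UNIV" by (rule Phi_holo[OF admf]) (use l0 in auto)
      moreover have "\<Psi> = (\<lambda>w. (Phi (\<lambda>\<theta>. \<omega>0 \<theta> + lam0 * h \<theta>) w - g w) / of_real lam0)"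
        using fam[of lam0] l0 by (auto simp: fun_eq_iff)
      ultimately show ?thesis using hg by (auto intro!: holomorphic_intros)
    qed
    have "\<Psi> (of_real x) = of_real (1 / x)"
      unfolding \<Psi>_def Phi_real[OF conth] using Psi2[of x] x True unfolding h_def by simp
    then have "Re (\<Psi> (of_real x)) > 0" using x by simp
    then obtain \<delta> where \<delta>: "\<delta> > 0" "\<And>y. \<bar>y - x\<bar> < \<delta> \<Longrightarrow> Re (\<Psi> (of_real y)) > 0"
      using pos_near[OF isCont_Re_of_real[OF hp]] by blast
    show False
    proof (rule hurwitz_perturb[OF hg hp gx0 _ l0])
      show "min \<rho> \<delta> > 0" using \<rho>0 \<delta> by simp
      show "Re (g (of_real y)) \<ge> 0" if "\<bar>y - x\<bar> < min \<rho> \<delta>" for y using gnn that by simp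
      show "Re (\<Psi> (of_real y)) > 0" if "\<bar>y - x\<bar> < min \<rho> \<delta>" for y using \<delta> that by simp
      show "Im z = 0" if "0 < lam" "lam \<le> lam0" "g z + of_real lam * \<Psi> z = 0" for lam z
        using Phi_real_zeros[OF admf[of lam]] fam[of lam z] that by simp
      show "\<not> g constant_on ball (of_real x) (min \<rho> \<delta>)" using nc \<rho>0 \<delta> by simp
    qed
  qed
qed

theorem mainTheorem5:
  fixes \<nu> :: real
  assumes "\<bar>\<nu>\<bar> < 1"
  defines "F \<equiv> (\<lambda>z. hyp1F2 1 (complex_of_real ((3 - \<nu>) / 2)) (complex_of_real ((3 + \<nu>) / 2)) z)"
  shows "\<forall>z. F z = 0 \<longrightarrow>
           z \<in> \<real> \<and> Re z < 0 \<and> deriv F z \<noteq> 0 \<and>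
           (\<exists>k::nat. k \<ge> 1 \<and> - (pi^2 * (real k + 1)^2 / 4) \<le> Re z \<and> Re z \<le> - (pi^2 * (real k)^2 / 4))"
proof (intro allI impI)
  note nu = assms(1)
  fix z assume Fz: "F z = 0"
  have FFe: "F = FF \<nu>" unfolding F_def FF_def by (rule ext) simp
  define \<omega>0 where "\<omega>0 = (\<lambda>\<theta>::real. cos (\<nu> * \<theta>))"
  define g where "g = Phi \<omega>0"
  have adm0: "adm \<omega>0" unfolding \<omega>0_def by (rule adm_cos[OF nu])
  have gFF: "g w = of_real (KK \<nu>) * w * FF \<nu> (- (w^2) / 4)" for w
    unfolding g_def \<omega>0_def by (rule Phi_FF[OF nu])
  define w where "w = csqrt (- 4 * z)"
  have w2: "- (w^2) / 4 = z" unfolding w_def by simp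
  have FFz: "FF \<nu> z = 0" using Fz FFe by simp
  have z0: "z \<noteq> 0" using FFz FF_0[OF nu] by auto
  have w0: "w \<noteq> 0" using w2 z0 by auto
  have "g w = 0" using gFF[of w] w2 FFz by simp
  then have imw: "Im w = 0" unfolding g_def by (rule Phi_real_zeros[OF adm0])
  define x where "x = Re w"
  have wx: "w = of_real x" using imw unfolding x_def by (simp add: complex_eq_iff)
  have "Re w \<ge> 0" using csqrt_principal[of "- 4 * z"] unfolding w_def by auto
  then have "x \<ge> 0" unfolding x_def .
  moreover have "x \<noteq> 0" using w0 wx by auto
  ultimately have x0: "x > 0" by simp
  have zx: "z = of_real (- (x^2) / 4)" using w2 wx by simp
  have gx: "g (of_real x) = 0" using gFF[of "of_real x"] zx FFz by simp
  have xpi: "x > pi"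
  proof (rule ccontr)
    assume "\<not> x > pi"
    then have "Re (g (of_real x)) > 0" unfolding g_def using x0 by (intro Phi_pos[OF adm0]) auto
    then show False using gx by simp
  qed
  show "z \<in> \<real> \<and> Re z < 0 \<and> deriv F z \<noteq> 0 \<and>
           (\<exists>k::nat. k \<ge> 1 \<and> - (pi^2 * (real k + 1)^2 / 4) \<le> Re z \<and> Re z \<le> - (pi^2 * (real k)^2 / 4))"
  proof (intro conjI)
    show "z \<in> \<real>" using zx by simp
    show "Re z < 0" using zx x0 by simp
    show "deriv F z \<noteq> 0"
    proof
      assume d0: "deriv F z = 0"
      have A: "FF \<nu> (complex_of_real (- (x^2) / 4)) = 0" using FFz unfolding zx .
      have "complex_of_real (Fr \<nu> (- (x^2) / 4)) = 0" using A FF_real[OF nu, of "- (x^2) / 4"] by simp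
      then have "Fr \<nu> (- (x^2) / 4) = 0" by (simp only: of_real_eq_0_iff)
      moreover have B: "deriv (FF \<nu>) (complex_of_real (- (x^2) / 4)) = 0" using d0 FFe unfolding zx by simp
      have "complex_of_real (Fr1 \<nu> (- (x^2) / 4)) = 0" using B FF_deriv_real[OF nu, of "- (x^2) / 4"] by simp
      then have "Fr1 \<nu> (- (x^2) / 4) = 0" by (simp only: of_real_eq_0_iff)
      ultimately show False using no_double_zero[OF nu x0] by blast
    qed
    define k where "k = nat \<lfloor>x / pi\<rfloor>"
    have fl: "real_of_int \<lfloor>x / pi\<rfloor> \<le> x / pi" "x / pi < real_of_int \<lfloor>x / pi\<rfloor> + 1" by linarith+
    have "x / pi > 1" using xpi by simp
    then have fl1: "\<lfloor>x / pi\<rfloor> \<ge> 1" by linarith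
    then have kk: "real k = real_of_int \<lfloor>x / pi\<rfloor>" unfolding k_def
      by (metis of_int_of_nat_eq int_nat_eq order.trans zero_le_one of_nat_nat)
    have k1: "k \<ge> 1" using fl1 unfolding k_def by linarith
    have "real_of_int \<lfloor>x / pi\<rfloor> * pi \<le> x" using fl(1) pi_gt_zero by (simp add: le_divide_eq)
    then have lo: "pi * real k \<le> x" using kk by (simp add: mult.commute)
    have "x < (real_of_int \<lfloor>x / pi\<rfloor> + 1) * pi" using fl(2) pi_gt_zero by (simp only: divide_less_eq)
    then have hi: "x \<le> pi * (real k + 1)" using kk by (simp add: mult.commute)
    have "(pi * real k)^2 \<le> x^2" using lo by (intro power_mono) auto
    moreover have "x^2 \<le> (pi * (real k + 1))^2" using hi x0 by (intro power_mono) auto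
    ultimately show "\<exists>k::nat. k \<ge> 1 \<and> - (pi^2 * (real k + 1)^2 / 4) \<le> Re z \<and> Re z \<le> - (pi^2 * (real k)^2 / 4)"
      using k1 zx by (intro exI[of _ k]) (auto simp: power_mult_distrib)
  qed
qed


end
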